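(* Let $z\in\mathbb C$. Then \[\sum_{m=1}^\infty\frac{d_z(m)}mH_m(1)=\frac{\mathbb E(L(1,\mathbb X)^z)}{\zeta(2)}\qquad\text{and}\qquad\sum_{m=1}^\infty\frac{d_z(m)}mH_m'(1)=\frac{\mathbb E(L(1,\mathbb X)^z)}{\zeta(2)}(\phi(z)-2\gamma).\]
   Context: $d_z$ is the multiplicative function with $d_z(p^\nu)=\Gamma(z+\nu)/(\Gamma(z)\nu!)$. Write $m=2^{e_1}p_2^{e_2}\cdots p_r^{e_r}$ ($e_1\ge0$, $p_j$ distinct odd primes, $e_j\ge1$), $m_0$ the squarefree part of $m/2^{e_1}$, $\omega(m_0)$ its number of prime factors; define \[h_m(s)=\frac{(-1)^{\omega(m_0)}}{m_0}\,\frac{\prod_{2\le j\le r,\ e_j\text{ even}}\bigl(1-\frac2{p_j}\bigr)\bigl(1+\frac{2(p_j-1)}{(p_j-2)(p_j^s-1)}\bigr)}{\prod_{p\mid m}\bigl(1+\frac2{p^s-1}\bigr)}\,\tilde\kappa(m,s),\] with $\tilde\kappa(m,s)=1$ if $m$ is odd and $\tilde\kappa(m,s)=\frac{(-1)^{e_1}}2\frac{8^s+4^s}{8^s+2^s+2}\bigl(1+\frac{2(1+(-1)^{e_1})}{4^s(2^s-1)}\bigr)$ if $m$ is even, and $H_m(s)=\frac{8^s+2^s+2}{8^s+4^s}\frac{h_m(s)}{\zeta(2s)}$; $H_m'$ is the derivative in $s$. $(\mathbb X(p))_p$ are independent random variables indexed by primes with $\mathbb P(\mathbb X(p)=1)=\frac{(p-1)^2}{2p(p+1)}$,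 $\mathbb P(\mathbb X(p)=-1)=\frac{p-1}{2p}$, $\mathbb P(\mathbb X(p)=0)=\frac2{p+1}$; $\mathbb E(L(1,\mathbb X)^z):=\prod_p\mathbb E((1-\mathbb X(p)/p)^{-z})$. $\gamma$ is the Euler–Mascheroni constant and \[\phi(z)=\sum_{p\ge3}\frac{\frac{2\log p}{(p+1)^2}\bigl(1-(1-\frac1p)^{-z}\bigr)}{\mathbb E\bigl((1-\frac{\mathbb X(p)}{p})^{-z}\bigr)}-\frac{\log 2}{9}\,\frac{4\cdot 2^z+5}{\frac16 2^z+\frac12(\frac23)^z+\frac43}-\frac{2\zeta'(2)}{\zeta(2)}+2\gamma,\] where, if $\phi(z)$ is undefined, $\mathbb E(L(1,\mathbb X)^z)\phi(z)$ is interpreted by cancelling the vanishing factor. *)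

theory Defs
  imports "HOL-Complex_Analysis.Complex_Analysis" "HOL-Computational_Algebra.Computational_Algebra"
begin

(* Generalised divisor function d_z, multiplicative with
   d_z(p^nu) = Gamma(z+nu)/(Gamma(z) nu!) = pochhammer z nu / nu!
   (the pochhammer form is the standard meaning of the Gamma quotient, valid for all z). *)
definition dz :: "complex \<Rightarrow> nat \<Rightarrow> complex" where
  "dz z m = (\<Prod>p\<in>prime_factors m. pochhammer z (multiplicity p m) / fact (multiplicity p m))"

(* Riemann zeta function on Re s > 1 (only used at and near s = 2) *)
definition zeta :: "complex \<Rightarrow> complex" where
  "zeta s = (\<Sum>n. 1 / (of_nat (Suc n)) powr s)"

definition e1 :: "nat \<Rightarrow> nat" where
  "e1 m = multiplicity 2 m"

definition odd_exp_primes :: "nat \<Rightarrow> nat set" where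
  "odd_exp_primes m = {p \<in> prime_factors m. p \<noteq> 2 \<and> odd (multiplicity p m)}"

definition even_exp_primes :: "nat \<Rightarrow> nat set" where
  "even_exp_primes m = {p \<in> prime_factors m. p \<noteq> 2 \<and> even (multiplicity p m)}"

(* m_0 = squarefree part of m / 2^e_1 *)
definition m0 :: "nat \<Rightarrow> nat" where
  "m0 m = \<Prod>(odd_exp_primes m)"

definition kappa :: "nat \<Rightarrow> complex \<Rightarrow> complex" where
  "kappa m s = (if odd m then 1 else
     (-1) ^ e1 m / 2 * ((8 powr s + 4 powr s) / (8 powr s + 2 powr s + 2))
       * (1 + 2 * (1 + (-1) ^ e1 m) / (4 powr s * (2 powr s - 1))))"

definition hm :: "nat \<Rightarrow> complex \<Rightarrow> complex" where
  "hm m s = (-1) ^ card (prime_factors (m0 m)) / of_nat (m0 m)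
     * ((\<Prod>p\<in>even_exp_primes m. (1 - 2 / of_nat p)
            * (1 + 2 * (of_nat p - 1) / ((of_nat p - 2) * (of_nat p powr s - 1))))
        / (\<Prod>p\<in>prime_factors m. 1 + 2 / (of_nat p powr s - 1)))
     * kappa m s"

definition Hm :: "nat \<Rightarrow> complex \<Rightarrow> complex" where
  "Hm m s = (8 powr s + 2 powr s + 2) / (8 powr s + 4 powr s) * hm m s / zeta (2 * s)"

(* E((1 - X(p)/p)^(-z)) for the random variable X(p) *)
definition EXp :: "nat \<Rightarrow> complex \<Rightarrow> complex" where
  "EXp p z = of_real ((real p - 1)^2 / (2 * real p * (real p + 1))) * of_real (1 - 1 / real p) powr (-z)
          + of_real ((real p - 1) / (2 * real p)) * of_real (1 + 1 / real p) powr (-z)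
          + of_real (2 / (real p + 1))"

(* E(L(1,X)^z) = prod over primes *)
definition EL :: "complex \<Rightarrow> complex" where
  "EL z = (\<Prod>n. if prime n then EXp n z else 1)"

definition aphi :: "nat \<Rightarrow> complex \<Rightarrow> complex" where
  "aphi p z = of_real (2 * ln (real p) / (real p + 1)^2) * (1 - of_real (1 - 1 / real p) powr (-z))"

definition phi :: "complex \<Rightarrow> complex" where
  "phi z = (\<Sum>n. if prime n \<and> n \<ge> 3 then aphi n z / EXp n z else 0)
     - of_real (ln 2 / 9) * (4 * 2 powr z + 5) / (1/6 * 2 powr z + 1/2 * (2/3) powr z + 4/3)
     - 2 * deriv zeta 2 / zeta 2 + 2 * euler_mascheroni"

(* E(L(1,X)^z) * phi(z), where, if phi(z) is undefined (some factor EXp p z vanishes),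
   the product is interpreted by cancelling the vanishing factor.  Note
   1/6*2^z + 1/2*(2/3)^z + 4/3 = 2 * EXp 2 z. *)
definition EL_phi :: "complex \<Rightarrow> complex" where
  "EL_phi z = (if (\<forall>p. prime p \<longrightarrow> EXp p z \<noteq> 0) then EL z * phi z else
      (\<Sum>n. if prime n \<and> n \<ge> 3 then aphi n z * (\<Prod>q. if prime q \<and> q \<noteq> n then EXp q z else 1) else 0)
      - of_real (ln 2 / 9) * (4 * 2 powr z + 5) / 2 * (\<Prod>q. if prime q \<and> q \<noteq> 2 then EXp q z else 1)
      + (- 2 * deriv zeta 2 / zeta 2 + 2 * euler_mascheroni) * EL z)"

end

theory Submission
  imports Defs
begin


definition mf :: "(nat \<Rightarrow> nat \<Rightarrow> 'a::comm_monoid_mult) \<Rightarrow> nat \<Rightarrow> 'a" where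
  "mf f m = (\<Prod>p\<in>prime_factors m. f p (multiplicity p m))"

lemma pf_prod_powers:
  assumes "finite P" "\<And>p. p \<in> P \<Longrightarrow> prime (p::nat)"
  shows "prime_factors (\<Prod>p\<in>P. p ^ g p) = {p\<in>P. g p > 0}"
proof (rule set_eqI)
  fix q
  have pf: "prime_factors n = {p. prime p \<and> multiplicity p n > 0}" for n :: nat
    by (rule prime_factors_multiplicity)
  show "q \<in> prime_factors (\<Prod>p\<in>P. p ^ g p) \<longleftrightarrow> q \<in> {p\<in>P. g p > 0}"
  proof (cases "prime q")
    case True
    then show ?thesis using multiplicity_prod_prime_powers[OF assms True, of g] unfolding pf by auto
  next
    case False
    then show ?thesis using assms(2) unfolding pf by auto
  qed
qed

lemma smooth_bij:
  assumes "finite P" "\<And>p. p \<in> P \<Longrightarrow> prime (p::nat)"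
  shows "bij_betw (\<lambda>g. \<Prod>p\<in>P. p ^ g p) (PiE P (\<lambda>_. UNIV)) {m. m > 0 \<and> prime_factors m \<subseteq> P}"
proof (rule bij_betwI[where g = "\<lambda>m. restrict (\<lambda>p. multiplicity p m) P"])
  show "(\<lambda>g. \<Prod>p\<in>P. p ^ g p) \<in> (PiE P (\<lambda>_. UNIV)) \<rightarrow> {m. m > 0 \<and> prime_factors m \<subseteq> P}"
    using assms by (auto simp: pf_prod_powers prime_gt_0_nat)
  show "(\<lambda>m. restrict (\<lambda>p. multiplicity p m) P) \<in> {m. m > 0 \<and> prime_factors m \<subseteq> P} \<rightarrow> (PiE P (\<lambda>_. UNIV))"
    by auto
  show "restrict (\<lambda>p. multiplicity p (\<Prod>p\<in>P. p ^ g p)) P = g" if "g \<in> PiE P (\<lambda>_. UNIV)" for g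
    using that multiplicity_prod_prime_powers[OF assms, of _ g] assms
    by (auto simp: fun_eq_iff PiE_def extensional_def)
  show "(\<Prod>p\<in>P. p ^ restrict (\<lambda>p. multiplicity p m) P p) = m" if "m \<in> {m. m > 0 \<and> prime_factors m \<subseteq> P}" for m
  proof -
    have "(\<Prod>p\<in>P. p ^ restrict (\<lambda>p. multiplicity p m) P p) = (\<Prod>p\<in>P. p ^ multiplicity p m)"
      by (rule prod.cong) auto
    also have "\<dots> = (\<Prod>p\<in>prime_factors m. p ^ multiplicity p m)"
    proof (intro prod.mono_neutral_right)
      show "\<forall>i\<in>P - prime_factors m. i ^ multiplicity i m = 1"
      proof
        fix i assume i: "i \<in> P - prime_factors m"
        have pf: "prime_factors m = {p. prime p \<and> multiplicity p m > 0}"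
          by (rule prime_factors_multiplicity)
        show "i ^ multiplicity i m = 1" using i assms(2)[of i] unfolding pf by auto
      qed
    qed (use that assms(1) in auto)
    also have "\<dots> = m" using that by (simp add: prod_prime_factors)
    finally show ?thesis .
  qed
qed

lemma mf_prod_powers:
  assumes "finite P" "\<And>p. p \<in> P \<Longrightarrow> prime (p::nat)" "\<And>p. f p 0 = 1"
  shows "mf f (\<Prod>p\<in>P. p ^ g p) = (\<Prod>p\<in>P. f p (g p))"
proof -
  have pf: "prime_factors (\<Prod>p\<in>P. p ^ g p) = {p\<in>P. g p > 0}"
    by (rule pf_prod_powers[OF assms(1,2)])
  have "mf f (\<Prod>p\<in>P. p ^ g p) = (\<Prod>p\<in>{p\<in>P. g p > 0}. f p (g p))"
    unfolding mf_def
    using multiplicity_prod_prime_powers[OF assms(1,2), of _ g] assms(2)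
    by (intro prod.cong[OF pf]) auto
  also have "\<dots> = (\<Prod>p\<in>P. f p (g p))"
    using assms by (intro prod.mono_neutral_left) auto
  finally show ?thesis .
qed

lemma euler_finite:
  fixes f :: "nat \<Rightarrow> nat \<Rightarrow> 'a::{real_normed_field,banach,second_countable_topology}"
  assumes P: "finite P" "\<And>p. p \<in> P \<Longrightarrow> prime p" and f0: "\<And>p. f p 0 = 1"
    and fs: "\<And>p. p \<in> P \<Longrightarrow> (\<lambda>k. norm (f p k)) summable_on UNIV"
  shows "(mf f has_sum (\<Prod>p\<in>P. infsum (f p) UNIV)) {m. m > 0 \<and> prime_factors m \<subseteq> P}"
    and "(\<lambda>m. norm (mf f m)) summable_on {m. m > 0 \<and> prime_factors m \<subseteq> P}"
proof -
  have s1: "Infinite_Set_Sum.abs_summable_on (f p) UNIV" if "p \<in> P" for p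
    using fs[OF that] abs_summable_equivalent by blast
  have s2: "Infinite_Set_Sum.abs_summable_on (\<lambda>g. \<Prod>p\<in>P. f p (g p)) (PiE P (\<lambda>_. UNIV))"
    by (rule abs_summable_on_prod_PiE) (use P s1 in auto)
  have s3: "(\<lambda>g. norm (\<Prod>p\<in>P. f p (g p))) summable_on (PiE P (\<lambda>_. UNIV))"
    by (rule abs_summable_equivalent[THEN iffD2, OF s2])
  have s4: "(\<lambda>g. \<Prod>p\<in>P. f p (g p)) summable_on (PiE P (\<lambda>_. UNIV))"
    by (rule Infinite_Sum.abs_summable_summable[OF s3])
  have eq: "infsum (\<lambda>g. \<Prod>p\<in>P. f p (g p)) (PiE P (\<lambda>_. UNIV)) = (\<Prod>p\<in>P. infsum (f p) UNIV)"
    by (rule infsum_prod_PiE_abs) (use P fs in auto)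
  have hs: "((\<lambda>g. \<Prod>p\<in>P. f p (g p)) has_sum (\<Prod>p\<in>P. infsum (f p) UNIV)) (PiE P (\<lambda>_. UNIV))"
    using s4 eq has_sum_infsum by metis
  have bij: "bij_betw (\<lambda>g. \<Prod>p\<in>P. p ^ g p) (PiE P (\<lambda>_. UNIV)) {m. m > 0 \<and> prime_factors m \<subseteq> P}"
    by (rule smooth_bij[OF P])
  have c: "mf f (\<Prod>p\<in>P. p ^ g p) = (\<Prod>p\<in>P. f p (g p))" for g
    by (rule mf_prod_powers[where f=f, OF P f0])
  have "((\<lambda>g. mf f (\<Prod>p\<in>P. p ^ g p)) has_sum (\<Prod>p\<in>P. infsum (f p) UNIV)) (PiE P (\<lambda>_. UNIV))"
    using hs unfolding c .
  then show "(mf f has_sum (\<Prod>p\<in>P. infsum (f p) UNIV)) {m. m > 0 \<and> prime_factors m \<subseteq> P}"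
    using has_sum_reindex_bij_betw[OF bij] by blast
  have "(\<lambda>g. norm (mf f (\<Prod>p\<in>P. p ^ g p))) summable_on (PiE P (\<lambda>_. UNIV))"
    using s3 unfolding c .
  then show "(\<lambda>m. norm (mf f m)) summable_on {m. m > 0 \<and> prime_factors m \<subseteq> P}"
    using summable_on_reindex_bij_betw[OF bij, of "\<lambda>m. norm (mf f m)"] by blast
qed

lemma norm_mf: "norm (mf f m) = mf (\<lambda>p k. norm (f p k :: 'a :: real_normed_field)) m"
  unfolding mf_def by (simp add: prod_norm)

lemma euler_abs:
  fixes f :: "nat \<Rightarrow> nat \<Rightarrow> 'a::{real_normed_field,banach,second_countable_topology}"
  assumes f0: "\<And>p. f p 0 = 1"
    and fs: "\<And>p. prime p \<Longrightarrow> (\<lambda>k. norm (f p k)) summable_on UNIV"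
    and fb: "\<And>p. prime p \<Longrightarrow> infsum (\<lambda>k. norm (f p k)) UNIV \<le> 1 + \<beta> p"
    and \<beta>: "summable \<beta>" "\<And>p. \<beta> p \<ge> 0"
  shows "(\<lambda>m. norm (mf f m)) summable_on {0<..}"
proof (rule nonneg_bdd_above_summable_on)
  show "bdd_above (sum (\<lambda>m. norm (mf f m)) ` {F. F \<subseteq> {0<..} \<and> finite F})"
  proof (rule bdd_aboveI2)
    fix F :: "nat set" assume F: "F \<in> {F. F \<subseteq> {0<..} \<and> finite F}"
    define N where "N = Max (insert 1 F)"
    define P where "P = {p. prime p \<and> p \<le> N}"
    have finP: "finite P" unfolding P_def by auto
    have primeP: "\<And>p. p \<in> P \<Longrightarrow> prime p" unfolding P_def by auto
    have sub: "F \<subseteq> {m. m > 0 \<and> prime_factors m \<subseteq> P}"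
    proof
      fix m assume m: "m \<in> F"
      have "m \<le> N" unfolding N_def using F m by auto
      moreover have "q \<le> m" if "q \<in> prime_factors m" for q
        using that m F by (auto intro!: dvd_imp_le simp: in_prime_factors_iff)
      ultimately have "prime_factors m \<subseteq> P"
        unfolding P_def by (auto simp: in_prime_factors_iff) (meson order.trans)
      then show "m \<in> {m. m > 0 \<and> prime_factors m \<subseteq> P}"
        using m F by auto
    qed
    let ?g = "\<lambda>p k. norm (f p k)"
    have g0: "\<And>p. ?g p 0 = 1" using f0 by simp
    have gs: "\<And>p. p \<in> P \<Longrightarrow> (\<lambda>k. norm (?g p k)) summable_on UNIV"
      using fs primeP by simp
    have hs: "(mf ?g has_sum (\<Prod>p\<in>P. infsum (?g p) UNIV)) {m. m > 0 \<and> prime_factors m \<subseteq> P}"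
      by (rule euler_finite(1)[OF finP primeP g0 gs])
    have "sum (\<lambda>m. norm (mf f m)) F = sum (mf ?g) F" by (simp add: norm_mf)
    also have "\<dots> \<le> (\<Prod>p\<in>P. infsum (?g p) UNIV)"
      using F sub by (intro finite_sum_le_has_sum[OF hs]) (auto simp: mf_def intro!: prod_nonneg)
    also have "\<dots> \<le> (\<Prod>p\<in>P. exp (\<beta> p))"
    proof (intro prod_mono conjI)
      fix p assume p: "p \<in> P"
      show "0 \<le> infsum (?g p) UNIV" by (intro infsum_nonneg) auto
      have "infsum (?g p) UNIV \<le> 1 + \<beta> p" using fb primeP p by blast
      also have "\<dots> \<le> exp (\<beta> p)" by (rule exp_ge_add_one_self[of "\<beta> p", simplified add.commute])
      finally show "infsum (?g p) UNIV \<le> exp (\<beta> p)" .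
    qed
    also have "\<dots> = exp (\<Sum>p\<in>P. \<beta> p)" by (simp add: exp_sum finP)
    also have "\<dots> \<le> exp (suminf \<beta>)"
      using \<beta> finP by (auto intro!: sum_le_suminf)
    finally show "sum (\<lambda>m. norm (mf f m)) F \<le> exp (suminf \<beta>)" .
  qed
qed auto



lemma tail_to_zero:
  fixes a :: "nat \<Rightarrow> real"
  assumes "a summable_on A" "\<And>m. a m \<ge> 0"
  shows "(\<lambda>N. infsum a (A \<inter> {N..})) \<longlonglongrightarrow> 0"
proof -
  define b where "b m = (if m \<in> A then a m else 0)" for m
  have bs: "b summable_on UNIV"
  proof -
    have "a summable_on A \<longleftrightarrow> b summable_on UNIV"
      by (rule summable_on_cong_neutral) (auto simp: b_def)
    with assms(1) show ?thesis by simp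
  qed
  have bsum: "b sums infsum b UNIV" using has_sum_imp_sums[OF has_sum_infsum[OF bs]] .
  have eq: "infsum a (A \<inter> {N..}) = infsum b UNIV - (\<Sum>m<N. b m)" for N
  proof -
    have "infsum a (A \<inter> {N..}) = infsum b {N..}"
      unfolding b_def by (rule infsum_cong_neutral) auto
    moreover have "{N..} = UNIV - {..<N}" by auto
    moreover have "infsum b (UNIV - {..<N}) = infsum b UNIV - infsum b {..<N}"
      by (rule infsum_Diff[OF bs]) (auto intro: summable_on_finite)
    ultimately have "infsum a (A \<inter> {N..}) = infsum b UNIV - infsum b {..<N}" by simp
    then show ?thesis by simp
  qed
  have "(\<lambda>N. infsum b UNIV - (\<Sum>m<N. b m)) \<longlonglongrightarrow> infsum b UNIV - infsum b UNIV"
    using bsum unfolding sums_def by (intro tendsto_intros)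
  then show ?thesis unfolding eq by simp
qed

lemma euler_product:
  fixes f :: "nat \<Rightarrow> nat \<Rightarrow> 'a::{real_normed_field,banach,second_countable_topology}"
  assumes f0: "\<And>p. f p 0 = 1"
    and fs: "\<And>p. prime p \<Longrightarrow> (\<lambda>k. norm (f p k)) summable_on UNIV"
    and fb: "\<And>p. prime p \<Longrightarrow> infsum (\<lambda>k. norm (f p k)) UNIV \<le> 1 + \<beta> p"
    and \<beta>: "summable \<beta>" "\<And>p. \<beta> p \<ge> 0"
  shows "(mf f has_sum prodinf (\<lambda>n. if prime n then infsum (f n) UNIV else 1)) {0<..}"
proof -
  define F where "F n = (if prime n then infsum (f n) UNIV else 1)" for n
  have abs: "(\<lambda>m. norm (mf f m)) summable_on {0<..}"
    by (rule euler_abs[OF f0 fs fb \<beta>])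
  have summ: "mf f summable_on {0<..}"
    by (rule Infinite_Sum.abs_summable_summable[OF abs])
  define T where "T = infsum (mf f) {0<..}"
  have Fb: "norm (F n - 1) \<le> \<beta> n" for n
  proof (cases "prime n")
    case True
    have s: "f n summable_on UNIV" using Infinite_Sum.abs_summable_summable[OF fs[OF True]] .
    have s': "(\<lambda>k. norm (f n k)) summable_on (UNIV - {0})"
      using fs[OF True] by (rule summable_on_subset_banach) auto
    have "F n - 1 = infsum (f n) (UNIV - {0})"
      using infsum_Diff[OF s summable_on_finite[of "{0}"]] True f0 by (simp add: F_def)
    then have "norm (F n - 1) \<le> infsum (\<lambda>k. norm (f n k)) (UNIV - {0})"
      using norm_infsum_bound[OF s'] by simp
    also have "\<dots> = infsum (\<lambda>k. norm (f n k)) UNIV - 1"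
      using infsum_Diff[OF fs[OF True] summable_on_finite[of "{0}"]] f0 by simp
    also have "\<dots> \<le> \<beta> n" using fb[OF True] by simp
    finally show ?thesis .
  next
    case False
    then show ?thesis using \<beta>(2)[of n] by (simp add: F_def)
  qed
  have conv: "convergent_prod F"
    apply (rule abs_convergent_prod_imp_convergent_prod)
    apply (rule summable_imp_abs_convergent_prod)
    apply (rule summable_comparison_test'[OF \<beta>(1)])
    using Fb by auto
  have lim1: "(\<lambda>N. \<Prod>n<N. F n) \<longlonglongrightarrow> prodinf F"
  proof -
    have "(\<lambda>N. \<Prod>n\<le>N. F n) \<longlonglongrightarrow> prodinf F" by (rule convergent_prod_LIMSEQ[OF conv])
    then have "(\<lambda>N. \<Prod>n<Suc N. F n) \<longlonglongrightarrow> prodinf F" by (simp add: lessThan_Suc_atMost)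
    then show ?thesis by (rule LIMSEQ_imp_Suc)
  qed
  define S where "S (N::nat) = {m::nat. m > 0 \<and> prime_factors m \<subseteq> {p. prime p \<and> p < N}}" for N
  have EN: "(\<Prod>n<N. F n) = infsum (mf f) (S N)" for N
  proof -
    have "(\<Prod>n<N. F n) = (\<Prod>p\<in>{p. prime p \<and> p < N}. infsum (f p) UNIV)"
      unfolding F_def by (subst prod.inter_filter[symmetric]) (auto intro!: prod.cong)
    also have "\<dots> = infsum (mf f) (S N)"
      unfolding S_def
      by (rule infsumI[symmetric], rule euler_finite(1)) (use f0 fs in auto)
    finally show ?thesis .
  qed
  have sumS: "mf f summable_on S N" for N
    by (rule summable_on_subset_banach[OF summ]) (auto simp: S_def)
  have bound: "norm (T - (\<Prod>n<N. F n)) \<le> infsum (\<lambda>m. norm (mf f m)) ({0<..} \<inter> {N..})" for N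
  proof -
    have "T - (\<Prod>n<N. F n) = infsum (mf f) ({0<..} - S N)"
      unfolding T_def EN by (rule infsum_Diff[OF summ sumS, symmetric]) (auto simp: S_def)
    also have "norm \<dots> \<le> infsum (\<lambda>m. norm (mf f m)) ({0<..} - S N)"
      by (rule norm_infsum_bound, rule summable_on_subset_banach[OF abs]) auto
    also have "\<dots> \<le> infsum (\<lambda>m. norm (mf f m)) ({0<..} \<inter> {N..})"
    proof (rule infsum_mono2)
      show "(\<lambda>m. norm (mf f m)) summable_on ({0<..} - S N)"
        by (rule summable_on_subset_banach[OF abs]) auto
      show "(\<lambda>m. norm (mf f m)) summable_on ({0<..} \<inter> {N..})"
        by (rule summable_on_subset_banach[OF abs]) auto
      show "{0<..} - S N \<subseteq> {0<..} \<inter> {N..}"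
      proof
        fix m assume m: "m \<in> {0<..} - S N"
        then obtain q where q: "q \<in> prime_factors m" "\<not> q < N" by (auto simp: S_def in_prime_factors_iff)
        then have "q \<le> m" using m by (auto intro!: dvd_imp_le simp: in_prime_factors_iff)
        then show "m \<in> {0<..} \<inter> {N..}" using q m by auto
      qed
    qed auto
    finally show ?thesis .
  qed
  have "(\<lambda>N. T - (\<Prod>n<N. F n)) \<longlonglongrightarrow> 0"
    by (rule Lim_null_comparison[OF always_eventually[OF allI[OF bound]] tail_to_zero]) (use abs in auto)
  then have "(\<lambda>N. T - (T - (\<Prod>n<N. F n))) \<longlonglongrightarrow> T - 0"
    by (intro tendsto_intros)
  then have "(\<lambda>N. \<Prod>n<N. F n) \<longlonglongrightarrow> T" by simp
  with lim1 have "prodinf F = T" by (rule LIMSEQ_unique)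
  then show ?thesis
    unfolding F_def[abs_def, symmetric] T_def using has_sum_infsum[OF summ] by simp
qed



lemma prod_has_sum:
  fixes u :: "'b \<Rightarrow> 'a::{real_normed_field,banach,second_countable_topology}" and w :: "'c \<Rightarrow> 'a"
  assumes u: "(u has_sum U) A" "(\<lambda>x. norm (u x)) summable_on A"
    and w: "(w has_sum W) B" "(\<lambda>x. norm (w x)) summable_on B"
  shows "((\<lambda>(x,y). u x * w y) has_sum U * W) (A \<times> B)"
    and "(\<lambda>(x,y). norm (u x * w y)) summable_on (A \<times> B)"
proof -
  have ninner: "(\<lambda>y. norm (u x * w y)) summable_on B" for x
    using summable_on_cmult_right[OF w(2), of "norm (u x)"] by (simp add: norm_mult)
  have ninf: "infsum (\<lambda>y. norm (u x * w y)) B = norm (u x) * infsum (\<lambda>y. norm (w y)) B" for x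
    by (simp add: norm_mult infsum_cmult_right')
  have "(\<lambda>x. infsum (\<lambda>y. norm (u x * w y)) B) summable_on A"
    unfolding ninf by (rule summable_on_cmult_left[OF u(2)])
  then have "(\<lambda>x. norm (infsum (\<lambda>y. norm (u x * w y)) B)) summable_on A"
    by (simp add: ninf infsum_nonneg)
  then have abs: "(\<lambda>z. norm ((\<lambda>(x,y). u x * w y) z)) summable_on Sigma A (\<lambda>_. B)"
    using Infinite_Sum.abs_summable_on_Sigma_iff[where f="\<lambda>(x,y). u x * w y" and A=A and B="\<lambda>_. B"] ninner by auto
  then show "(\<lambda>(x,y). norm (u x * w y)) summable_on (A \<times> B)"
    by (simp add: case_prod_unfold)
  show "((\<lambda>(x,y). u x * w y) has_sum U * W) (A \<times> B)"
  proof (rule has_sum_SigmaI[where g = "\<lambda>x. u x * W"])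
    show "((\<lambda>y. (\<lambda>(x,y). u x * w y) (x, y)) has_sum u x * W) B" if "x \<in> A" for x
      using has_sum_cmult_right[OF w(1), of "u x"] by simp
    show "((\<lambda>x. u x * W) has_sum U * W) A"
      by (rule has_sum_cmult_left[OF u(1)])
    show "(\<lambda>(x,y). u x * w y) summable_on Sigma A (\<lambda>_. B)"
      by (rule Infinite_Sum.abs_summable_summable[OF abs])
  qed
qed

lemma mult_decomp_bij:
  assumes p: "prime (p::nat)"
  shows "bij_betw (\<lambda>(k,m'). p ^ k * m') ({0<..} \<times> {m. m > 0 \<and> \<not> p dvd m}) {m. m > 0 \<and> p dvd m}"
proof (rule bij_betwI[where g = "\<lambda>m. (multiplicity p m, m div p ^ multiplicity p m)"])
  show "(\<lambda>(k,m'). p ^ k * m') \<in> ({0<..} \<times> {m. m > 0 \<and> \<not> p dvd m}) \<rightarrow> {m. m > 0 \<and> p dvd m}"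
    using p by (auto simp: prime_gt_0_nat)
  show "(\<lambda>m. (multiplicity p m, m div p ^ multiplicity p m)) \<in> {m. m > 0 \<and> p dvd m} \<rightarrow> ({0<..} \<times> {m. m > 0 \<and> \<not> p dvd m})"
  proof
    fix m assume m: "m \<in> {m. m > 0 \<and> p dvd m}"
    have "multiplicity p m > 0" using m p by (auto simp: prime_multiplicity_gt_zero_iff)
    moreover have "m div p ^ multiplicity p m > 0"
      using m multiplicity_dvd[of p m] by (auto simp: div_greater_zero_iff prime_gt_0_nat intro!: dvd_imp_le)
    moreover have "\<not> p dvd m div p ^ multiplicity p m"
      using m p by (intro multiplicity_decompose) (auto dest: not_prime_unit)
    ultimately show "(multiplicity p m, m div p ^ multiplicity p m) \<in> {0<..} \<times> {m. m > 0 \<and> \<not> p dvd m}"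
      by auto
  qed
  show "(multiplicity p (case x of (k, m') \<Rightarrow> p ^ k * m'),
         (case x of (k, m') \<Rightarrow> p ^ k * m') div p ^ multiplicity p (case x of (k, m') \<Rightarrow> p ^ k * m')) = x"
    if "x \<in> {0<..} \<times> {m. m > 0 \<and> \<not> p dvd m}" for x
  proof -
    obtain k m' where x: "x = (k, m')" by (cases x)
    have "multiplicity p (p ^ k * m') = k"
      by (rule multiplicity_decomposeI) (use that x p in auto)
    then show ?thesis using x p by (simp add: prime_gt_0_nat)
  qed
  show "(case (multiplicity p m, m div p ^ multiplicity p m) of (k, m') \<Rightarrow> p ^ k * m') = m" for m
    by (simp add: multiplicity_dvd)
qed

lemma pf_decomp:
  assumes p: "prime (p::nat)" and k: "k > 0" and m': "m' > 0" "\<not> p dvd m'"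
  shows "prime_factors (p ^ k * m') = insert p (prime_factors m')"
    and "multiplicity p (p ^ k * m') = k"
    and "\<And>q. q \<in> prime_factors m' \<Longrightarrow> multiplicity q (p ^ k * m') = multiplicity q m'"
proof -
  show "prime_factors (p ^ k * m') = insert p (prime_factors m')"
    using p k m' by (subst prime_factors_product) (auto simp: prime_factorization_prime_power prime_gt_0_nat)
  show "multiplicity p (p ^ k * m') = k"
    by (rule multiplicity_decomposeI) (use p m' in auto)
  fix q assume q: "q \<in> prime_factors m'"
  then have qp: "q \<noteq> p" using m' by (auto simp: in_prime_factors_iff)
  have "multiplicity q (p ^ k * m') = multiplicity q (p ^ k) + multiplicity q m'"
    using p q m' by (intro prime_elem_multiplicity_mult_distrib) (auto simp: in_prime_factors_iff prime_gt_0_nat)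
  also have "multiplicity q (p ^ k) = 0"
    using p q qp by (intro multiplicity_distinct_prime_power) (auto simp: in_prime_factors_iff)
  finally show "multiplicity q (p ^ k * m') = multiplicity q m'" by simp
qed



lemma euler_deriv:
  fixes f g :: "nat \<Rightarrow> nat \<Rightarrow> 'a::{real_normed_field,banach,second_countable_topology}"
  assumes f0: "\<And>p. f p 0 = 1"
    and fs: "\<And>p. prime p \<Longrightarrow> (\<lambda>k. norm (f p k)) summable_on UNIV"
    and fb: "\<And>p. prime p \<Longrightarrow> infsum (\<lambda>k. norm (f p k)) UNIV \<le> 1 + \<beta> p"
    and \<beta>: "summable \<beta>" "\<And>p. \<beta> p \<ge> 0"
    and g0: "\<And>p. g p 0 = 0"
    and gs: "\<And>p. prime p \<Longrightarrow> (\<lambda>k. norm (g p k)) summable_on UNIV"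
    and gb: "\<And>p. prime p \<Longrightarrow> infsum (\<lambda>k. norm (g p k)) UNIV \<le> \<gamma> p"
    and \<gamma>: "summable \<gamma>" "\<And>p. \<gamma> p \<ge> 0"
  shows "\<exists>X. ((\<lambda>m. \<Sum>p\<in>prime_factors m. g p (multiplicity p m) *
                 (\<Prod>q\<in>prime_factors m - {p}. f q (multiplicity q m))) has_sum X) {0<..}
          \<and> ((\<lambda>p. infsum (g p) UNIV * prodinf (\<lambda>q. if prime q \<and> q \<noteq> p then infsum (f q) UNIV else 1))
                has_sum X) {p. prime p}"
proof -
  define t where "t p m = g p (multiplicity p m) * (\<Prod>q\<in>prime_factors m - {p}. f q (multiplicity q m))" for p m
  define A where "A p = prodinf (\<lambda>q. if prime q \<and> q \<noteq> p then infsum (f q) UNIV else 1)" for p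
  define G where "G p = infsum (g p) UNIV" for p
  define D where "D p = {m::nat. m > 0 \<and> p dvd m}" for p
  define C where "C p = {m::nat. m > 0 \<and> \<not> p dvd m}" for p
  have absf: "(\<lambda>m. norm (mf f m)) summable_on {0<..}"
    by (rule euler_abs[OF f0 fs fb \<beta>])
  define M where "M = infsum (\<lambda>m. norm (mf f m)) {0<..}"
  have per_p: "(t p has_sum G p * A p) (D p) \<and> (\<lambda>m. norm (t p m)) summable_on D p
      \<and> infsum (\<lambda>m. norm (t p m)) (D p) \<le> \<gamma> p * M" if p: "prime p" for p
  proof -
    define fp where "fp q k = (if q = p \<and> k > 0 then 0 else f q k)" for q k
    have fp0: "\<And>q. fp q 0 = 1" by (simp add: fp_def f0)
    have fple: "norm (fp q k) \<le> norm (f q k)" for q k by (simp add: fp_def)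
    have fps: "(\<lambda>k. norm (fp q k)) summable_on UNIV" if "prime q" for q
      by (rule summable_on_comparison_test[OF fs[OF that]]) (auto simp: fple)
    have fpb: "infsum (\<lambda>k. norm (fp q k)) UNIV \<le> 1 + \<beta> q" if "prime q" for q
      using infsum_mono[OF fps[OF that] fs[OF that] fple] fb[OF that] by linarith
    have hp: "(mf fp has_sum prodinf (\<lambda>n. if prime n then infsum (fp n) UNIV else 1)) {0<..}"
      by (rule euler_product[OF fp0 fps fpb \<beta>])
    have "(fp p has_sum 1) UNIV"
    proof -
      have "(fp p has_sum sum (fp p) {0}) {0}" by (rule has_sum_finite) simp
      then have "(fp p has_sum 1) {0}" by (simp add: fp0)
      moreover have "(fp p has_sum 1) {0} \<longleftrightarrow> (fp p has_sum 1) UNIV"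
        by (rule has_sum_cong_neutral) (auto simp: fp_def)
      ultimately show ?thesis by simp
    qed
    then have "infsum (fp p) UNIV = 1" by (rule infsumI)
    then have "prodinf (\<lambda>n. if prime n then infsum (fp n) UNIV else 1) = A p"
    proof -
      have fpn: "fp n = f n" if "n \<noteq> p" for n using that by (auto simp: fp_def fun_eq_iff)
      show ?thesis
        unfolding A_def using \<open>infsum (fp p) UNIV = 1\<close> by (intro prodinf_cong) (auto simp: fpn)
    qed
    with hp have hp': "(mf fp has_sum A p) {0<..}" by simp
    have mffp: "mf fp m = (if p dvd m then 0 else mf f m)" if "m > 0" for m
    proof (cases "p dvd m")
      case True
      then have "p \<in> prime_factors m" using p that by (auto simp: in_prime_factors_iff)
      moreover have "multiplicity p m > 0" using True p that by (auto simp: prime_multiplicity_gt_zero_iff)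
      ultimately show ?thesis unfolding mf_def using True
        by (auto simp: fp_def intro!: prod_zero)
    next
      case False
      then show ?thesis unfolding mf_def
        by (auto simp: fp_def in_prime_factors_iff intro!: prod.cong)
    qed
    have hC: "(mf f has_sum A p) (C p)"
    proof -
      have "(mf fp has_sum A p) {0<..} \<longleftrightarrow> (mf f has_sum A p) (C p)"
        by (rule has_sum_cong_neutral) (auto simp: C_def mffp)
      with hp' show ?thesis by simp
    qed
    have aC: "(\<lambda>m. norm (mf f m)) summable_on C p"
      by (rule summable_on_subset_banach[OF absf]) (auto simp: C_def)
    have gsum: "g p summable_on UNIV" by (rule Infinite_Sum.abs_summable_summable[OF gs[OF p]])
    have hg: "(g p has_sum G p) {0<..}"
    proof -
      have "(g p has_sum G p) UNIV" unfolding G_def by (rule has_sum_infsum[OF gsum])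
      moreover have "(g p has_sum G p) UNIV \<longleftrightarrow> (g p has_sum G p) {0<..}"
        by (rule has_sum_cong_neutral) (auto simp: g0)
      ultimately show ?thesis by simp
    qed
    have ag: "(\<lambda>k. norm (g p k)) summable_on {0<..}"
      by (rule summable_on_subset_banach[OF gs[OF p]]) auto
    have pr1: "((\<lambda>(k,m'). g p k * mf f m') has_sum G p * A p) ({0<..} \<times> C p)"
      and pr2: "(\<lambda>(k,m'). norm (g p k * mf f m')) summable_on ({0<..} \<times> C p)"
      using prod_has_sum[OF hg ag hC aC] by auto
    have pr3: "((\<lambda>(k,m'). norm (g p k) * norm (mf f m')) has_sum
                 infsum (\<lambda>k. norm (g p k)) {0<..} * infsum (\<lambda>m. norm (mf f m)) (C p)) ({0<..} \<times> C p)"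
      using prod_has_sum(1)[OF has_sum_infsum[OF ag] _ has_sum_infsum[OF aC]] ag aC by simp
    have bij: "bij_betw (\<lambda>(k,m'). p ^ k * m') ({0<..} \<times> C p) (D p)"
      unfolding C_def D_def by (rule mult_decomp_bij[OF p])
    have teq: "t p ((\<lambda>(k,m'). p ^ k * m') x) = (\<lambda>(k,m'). g p k * mf f m') x"
      if "x \<in> {0<..} \<times> C p" for x
    proof -
      obtain k m' where x: "x = (k, m')" by (cases x)
      have k: "k > 0" and m': "m' > 0" "\<not> p dvd m'" using that x by (auto simp: C_def)
      note pd = pf_decomp[OF p k m']
      have "prime_factors (p ^ k * m') - {p} = prime_factors m'"
        using pd(1) m' by (auto simp: in_prime_factors_iff)
      then have "(\<Prod>q\<in>prime_factors (p ^ k * m') - {p}. f q (multiplicity q (p ^ k * m'))) = mf f m'"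
        unfolding mf_def using pd(3) by (auto intro!: prod.cong)
      then show ?thesis unfolding t_def x using pd(2) by simp
    qed
    have h1: "(t p has_sum G p * A p) (D p)"
    proof -
      have "((\<lambda>x. t p ((\<lambda>(k,m'). p ^ k * m') x)) has_sum G p * A p) ({0<..} \<times> C p)"
        using pr1 by (subst has_sum_cong[OF teq]) auto
      then show ?thesis using has_sum_reindex_bij_betw[OF bij] by blast
    qed
    have h2': "((\<lambda>x. norm (t p ((\<lambda>(k,m'). p ^ k * m') x))) has_sum
                 infsum (\<lambda>k. norm (g p k)) {0<..} * infsum (\<lambda>m. norm (mf f m)) (C p)) ({0<..} \<times> C p)"
      using pr3 by (subst has_sum_cong[OF arg_cong[where f=norm, OF teq]]) (auto simp: norm_mult case_prod_unfold)
    have h2: "((\<lambda>m. norm (t p m)) has_sum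
                 infsum (\<lambda>k. norm (g p k)) {0<..} * infsum (\<lambda>m. norm (mf f m)) (C p)) (D p)"
      using h2' has_sum_reindex_bij_betw[OF bij, where f="\<lambda>m. norm (t p m)"] by blast
    have "infsum (\<lambda>k. norm (g p k)) {0<..} \<le> infsum (\<lambda>k. norm (g p k)) UNIV"
      by (rule infsum_mono2[OF ag gs[OF p]]) auto
    also have "\<dots> \<le> \<gamma> p" by (rule gb[OF p])
    finally have b1: "infsum (\<lambda>k. norm (g p k)) {0<..} \<le> \<gamma> p" .
    have b2: "infsum (\<lambda>m. norm (mf f m)) (C p) \<le> M"
      unfolding M_def by (rule infsum_mono2[OF aC absf]) (auto simp: C_def)
    have "infsum (\<lambda>m. norm (t p m)) (D p) \<le> \<gamma> p * M"
      unfolding infsumI[OF h2]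
      by (rule mult_mono[OF b1 b2]) (auto intro!: infsum_nonneg simp: \<gamma>)
    then show ?thesis using h1 h2 by (auto dest: has_sum_imp_summable)
  qed
  define Q where "Q = Sigma {p. prime p} D"
  define tt where "tt x = t (fst x) (snd x)" for x
  have Mnn: "M \<ge> 0" unfolding M_def by (rule infsum_nonneg) auto
  have gsum: "(\<lambda>p. \<gamma> p * M) summable_on {p. prime p}"
  proof -
    have "\<gamma> summable_on UNIV" using \<gamma> summable_on_UNIV_nonneg_real_iff by blast
    then have "\<gamma> summable_on {p. prime p}" by (rule summable_on_subset_banach) auto
    then show ?thesis by (rule summable_on_cmult_left)
  qed
  have absQ: "(\<lambda>x. norm (tt x)) summable_on Q"
  proof -
    have "(\<lambda>p. infsum (\<lambda>m. norm (t p m)) (D p)) summable_on {p. prime p}"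
      by (rule summable_on_comparison_test[OF gsum]) (use per_p in \<open>auto intro!: infsum_nonneg\<close>)
    then have "(\<lambda>p. norm (infsum (\<lambda>m. norm (t p m)) (D p))) summable_on {p. prime p}"
      by (subst real_norm_def, subst abs_of_nonneg) (auto intro!: infsum_nonneg)
    then show ?thesis
      unfolding Q_def tt_def using Infinite_Sum.abs_summable_on_Sigma_iff[where f=tt and A="{p. prime p}" and B=D] per_p
      by (auto simp: tt_def)
  qed
  have sQ: "tt summable_on Q" by (rule Infinite_Sum.abs_summable_summable[OF absQ])
  define X where "X = infsum tt Q"
  have hQ: "(tt has_sum X) Q" unfolding X_def by (rule has_sum_infsum[OF sQ])
  have R1: "((\<lambda>p. G p * A p) has_sum X) {p. prime p}"
    by (rule has_sum_SigmaD[OF hQ[unfolded Q_def]]) (use per_p in \<open>auto simp: tt_def\<close>)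
  have bijs: "bij_betw (\<lambda>(m,p). (p,m)) (Sigma {0<..} (\<lambda>m. prime_factors m)) Q"
    unfolding Q_def D_def
    by (rule bij_betwI[where g="\<lambda>(p,m). (m,p)"]) (auto simp: in_prime_factors_iff)
  have "((\<lambda>x. tt ((\<lambda>(m,p). (p,m)) x)) has_sum X) (Sigma {0<..} (\<lambda>m. prime_factors m))"
    using has_sum_reindex_bij_betw[OF bijs] hQ by blast
  then have R2: "((\<lambda>m. \<Sum>p\<in>prime_factors m. t p m) has_sum X) {0<..}"
    by (rule has_sum_SigmaD) (auto simp: tt_def case_prod_unfold)
  show ?thesis using R1 R2 unfolding t_def A_def G_def by blast
qed



definition dterm :: "complex \<Rightarrow> nat \<Rightarrow> complex" where
  "dterm z k = pochhammer z k / fact k"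

definition Dr :: "real \<Rightarrow> nat \<Rightarrow> real" where
  "Dr r k = pochhammer r k / fact k"

lemma pochhammer_nonneg0: "(x::real) \<ge> 0 \<Longrightarrow> pochhammer x n \<ge> 0"
  by (induction n) (auto simp: pochhammer_Suc intro!: mult_nonneg_nonneg add_nonneg_nonneg)

lemma norm_pochhammer_le: "norm (pochhammer (z::complex) k) \<le> pochhammer (norm z) k"
proof (induction k)
  case 0 then show ?case by simp
next
  case (Suc k)
  have "norm (pochhammer z (Suc k)) = norm (pochhammer z k) * norm (z + of_nat k)"
    by (simp add: pochhammer_Suc norm_mult)
  also have "\<dots> \<le> pochhammer (norm z) k * (norm z + of_nat k)"
    by (intro mult_mono Suc.IH) (auto intro: pochhammer_nonneg0 order.trans[OF norm_triangle_ineq])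
  also have "\<dots> = pochhammer (norm z) (Suc k)" by (simp add: pochhammer_Suc)
  finally show ?case .
qed

lemma Dr_nonneg: "r \<ge> 0 \<Longrightarrow> Dr r k \<ge> 0"
  by (simp add: Dr_def pochhammer_nonneg0)

lemma norm_dterm: "norm (dterm z k) \<le> Dr (norm z) k"
  unfolding dterm_def Dr_def using norm_pochhammer_le[of z k]
  by (simp add: norm_divide divide_right_mono)

lemma dterm_gchoose: "((-z) gchoose k) * (-y) ^ k = dterm z k * y ^ k"
  for z y :: complex
proof -
  have a: "((-z) gchoose k) = (-1)^k * dterm z k" by (simp add: gbinomial_pochhammer dterm_def)
  have b: "(-y)^k = (-1)^k * y^k" by (rule power_minus)
  have c: "(-1::complex)^k * (-1)^k = 1" by (simp flip: power_mult_distrib)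
  have "((-z) gchoose k) * (-y) ^ k = ((-1)^k * (-1)^k) * (dterm z k * y ^ k)"
    unfolding a b by (simp only: mult_ac)
  then show ?thesis unfolding c by simp
qed

lemma Dr_gchoose: "((-r) gchoose k) * (-y) ^ k = Dr r k * y ^ k"
  for r y :: real
proof -
  have a: "((-r) gchoose k) = (-1)^k * Dr r k" by (simp add: gbinomial_pochhammer Dr_def)
  have b: "(-y)^k = (-1)^k * y^k" by (rule power_minus)
  have c: "(-1::real)^k * (-1)^k = 1" by (simp flip: power_mult_distrib)
  have "((-r) gchoose k) * (-y) ^ k = ((-1)^k * (-1)^k) * (Dr r k * y ^ k)"
    unfolding a b by (simp only: mult_ac)
  then show ?thesis unfolding c by simp
qed

lemma binom_real:
  assumes "r \<ge> 0" "0 \<le> y" "y < 1"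
  shows "((\<lambda>k. Dr r k * y ^ k) has_sum (1 - y) powr (-r)) UNIV"
proof -
  have "(\<lambda>k. ((-r) gchoose k) * (-y) ^ k) sums (1 + (-y)) powr (-r)"
    by (rule gen_binomial_real) (use assms in auto)
  then have "(\<lambda>k. Dr r k * y ^ k) sums (1 - y) powr (-r)"
    by (simp add: Dr_gchoose)
  then show ?thesis
    by (rule sums_nonneg_imp_has_sum) (use assms in \<open>auto intro!: mult_nonneg_nonneg Dr_nonneg\<close>)
qed

lemma binom_norm_summable:
  assumes "\<bar>y\<bar> < 1"
  shows "summable (\<lambda>k. norm (dterm z k * of_real y ^ k))"
proof -
  have "summable (\<lambda>k. Dr (norm z) k * \<bar>y\<bar> ^ k)"
    using has_sum_imp_sums[OF binom_real[of "norm z" "\<bar>y\<bar>"]] assms by (auto simp: sums_iff)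
  then show ?thesis
    by (rule summable_comparison_test'[where N=0])
       (auto simp: norm_mult norm_power intro!: mult_right_mono norm_dterm)
qed

lemma binom_complex:
  assumes "\<bar>y\<bar> < 1"
  shows "((\<lambda>k. dterm z k * of_real y ^ k) has_sum of_real (1 - y) powr (-z)) UNIV"
proof -
  have "norm (- complex_of_real y) < 1" using assms by simp
  then have "(\<lambda>k. ((-z) gchoose k) * (- of_real y) ^ k) sums (1 + (- of_real y)) powr (-z)"
    by (rule gen_binomial_complex)
  then have "(\<lambda>k. dterm z k * of_real y ^ k) sums of_real (1 - y) powr (-z)"
    by (simp add: dterm_gchoose)
  then show ?thesis
    by (rule norm_summable_imp_has_sum[OF binom_norm_summable[OF assms]])
qed

lemma binom_norm_has_sum:
  assumes "0 \<le> y" "y < 1"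
  shows "(\<lambda>k. norm (dterm z k * of_real y ^ k)) summable_on UNIV"
  using binom_norm_summable[of y z] assms
  by (subst summable_on_UNIV_nonneg_real_iff) auto



definition loc :: "complex \<Rightarrow> nat \<Rightarrow> real \<Rightarrow> real \<Rightarrow> complex \<Rightarrow> nat \<Rightarrow> complex" where
  "loc z p a b c0 k = (if k = 0 then c0 else dterm z k * of_real (1 / real p) ^ k * of_real (a + b * (-1) ^ k))"

lemma has_sum_single0:
  fixes c :: "'a::{comm_monoid_add,t2_space}"
  shows "((\<lambda>k::nat. if k = 0 then c else 0) has_sum c) UNIV"
proof -
  define F where "F = (\<lambda>k::nat. if k = 0 then c else 0)"
  have "(F has_sum c) {0}" by (rule has_sum_finiteI) (auto simp: F_def)
  moreover have "(F has_sum c) {0} \<longleftrightarrow> (F has_sum c) UNIV"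
    by (rule has_sum_cong_neutral) (auto simp: F_def)
  ultimately show ?thesis by (simp add: F_def)
qed

lemma loc_has_sum:
  assumes p: "p \<ge> 2"
  shows "(loc z p a b c0 has_sum (of_real a * of_real (1 - 1 / real p) powr (-z)
            + of_real b * of_real (1 + 1 / real p) powr (-z) + (c0 - of_real a - of_real b))) UNIV"
proof -
  define x where "x = 1 / real p"
  have x: "\<bar>x\<bar> < 1" "\<bar>-x\<bar> < 1" using p by (auto simp: x_def)
  have h1: "((\<lambda>k. of_real a * (dterm z k * of_real x ^ k)) has_sum of_real a * of_real (1 - x) powr (-z)) UNIV"
    by (rule has_sum_cmult_right[OF binom_complex[OF x(1)]])
  have h2: "((\<lambda>k. of_real b * (dterm z k * of_real (-x) ^ k)) has_sum of_real b * of_real (1 - (-x)) powr (-z)) UNIV"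
    by (rule has_sum_cmult_right[OF binom_complex[OF x(2)]])
  have h3: "((\<lambda>k::nat. if k = 0 then c0 - of_real a - of_real b else 0) has_sum (c0 - of_real a - of_real b)) UNIV"
    by (rule has_sum_single0)
  have "((\<lambda>k. of_real a * (dterm z k * of_real x ^ k) + of_real b * (dterm z k * of_real (-x) ^ k)
          + (if k = 0 then c0 - of_real a - of_real b else 0)) has_sum
        (of_real a * of_real (1 - x) powr (-z) + of_real b * of_real (1 - (-x)) powr (-z) + (c0 - of_real a - of_real b))) UNIV"
    by (intro has_sum_add h1 h2 h3)
  moreover have "of_real a * (dterm z k * of_real x ^ k) + of_real b * (dterm z k * of_real (-x) ^ k)
          + (if k = 0 then c0 - of_real a - of_real b else 0) = loc z p a b c0 k" for k
  proof (cases "k = 0")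
    case True then show ?thesis by (simp add: loc_def dterm_def)
  next
    case False
    have "(of_real (-x) :: complex) ^ k = of_real ((-1) ^ k) * of_real x ^ k"
      by (simp add: power_minus[of "complex_of_real x"])
    then show ?thesis using False by (simp add: loc_def x_def algebra_simps)
  qed
  ultimately show ?thesis unfolding x_def by simp
qed

lemma loc_norm_le:
  assumes "k \<ge> 1" "\<bar>a + b * (-1) ^ k\<bar> \<le> M" "p \<ge> 1"
  shows "norm (loc z p a b c0 k) \<le> M * (Dr (norm z) k * (1 / real p) ^ k)"
proof -
  have n1: "norm (complex_of_real (1 / real p) ^ k) = (1 / real p) ^ k"
    by (simp add: norm_power norm_divide)
  have n2: "norm (complex_of_real (a + b * (-1) ^ k)) = \<bar>a + b * (-1) ^ k\<bar>"
    by (rule norm_of_real)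
  have k0: "k \<noteq> 0" using assms by simp
  have "norm (loc z p a b c0 k) = norm (dterm z k) * norm (complex_of_real (1 / real p) ^ k)
      * norm (complex_of_real (a + b * (-1) ^ k))"
    by (simp only: loc_def if_not_P[OF k0] norm_mult)
  also have "\<dots> = norm (dterm z k) * (1 / real p) ^ k * \<bar>a + b * (-1) ^ k\<bar>"
    by (simp only: n1 n2)
  also have "\<dots> \<le> Dr (norm z) k * (1 / real p) ^ k * M"
    by (intro mult_mono norm_dterm) (use assms in \<open>auto intro!: Dr_nonneg mult_nonneg_nonneg\<close>)
  finally show ?thesis by (simp add: mult_ac)
qed

lemma loc_norm_summable:
  assumes "p \<ge> 2"
  shows "(\<lambda>k. norm (loc z p a b c0 k)) summable_on UNIV"
proof -
  define M where "M = \<bar>a\<bar> + \<bar>b\<bar>"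
  have s: "(\<lambda>k. Dr (norm z) k * (1 / real p) ^ k) summable_on UNIV"
    using binom_real[of "norm z" "1 / real p"] assms by (auto dest: has_sum_imp_summable)
  have s2: "(\<lambda>k. (if k = 0 then norm c0 else 0) + M * (Dr (norm z) k * (1 / real p) ^ k)) summable_on UNIV"
  proof (rule summable_on_add)
    show "(\<lambda>k::nat. if k = 0 then norm c0 else 0) summable_on UNIV"
      by (rule has_sum_imp_summable[OF has_sum_single0])
    show "(\<lambda>k. M * (Dr (norm z) k * (1 / real p) ^ k)) summable_on UNIV"
      by (rule summable_on_cmult_right[OF s])
  qed
  show ?thesis
  proof (rule summable_on_comparison_test[OF s2])
    fix k :: nat
    show "norm (loc z p a b c0 k) \<le> (if k = 0 then norm c0 else 0) + M * (Dr (norm z) k * (1 / real p) ^ k)"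
    proof (cases "k = 0")
      case True
      then show ?thesis using Dr_nonneg[of "norm z" 0] by (simp add: loc_def M_def)
    next
      case False
      have "\<bar>a + b * (-1) ^ k\<bar> \<le> M" unfolding M_def
        by (rule order.trans[OF abs_triangle_ineq]) (auto simp: abs_mult)
      then show ?thesis using False loc_norm_le[of k a b M p z c0] assms by simp
    qed
  qed auto
qed



lemma has_sum_single_at:
  fixes c :: "'a::{comm_monoid_add,t2_space}"
  shows "((\<lambda>k::nat. if k = j then c else 0) has_sum c) UNIV"
proof -
  define F where "F = (\<lambda>k::nat. if k = j then c else 0)"
  have "(F has_sum c) {j}" by (rule has_sum_finiteI) (auto simp: F_def)
  moreover have "(F has_sum c) {j} \<longleftrightarrow> (F has_sum c) UNIV"
    by (rule has_sum_cong_neutral) (auto simp: F_def)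
  ultimately show ?thesis by (simp add: F_def)
qed

lemma half_powr: "r \<ge> 0 \<Longrightarrow> (1 - 1/2 :: real) powr (-r) = 2 powr r"
  by (simp add: powr_minus_divide powr_divide)

lemma Dr_half_has_sum: "r \<ge> 0 \<Longrightarrow> ((\<lambda>k. Dr r k * (1/2) ^ k) has_sum 2 powr r) UNIV"
  using binom_real[of r "1/2"] half_powr[of r] by simp

lemma pow_le_half: "p \<ge> 2 \<Longrightarrow> (1 / real p) ^ j \<le> (1/2) ^ j"
  by (intro power_mono) (auto simp: field_simps)

lemma Dr_one: "Dr r 1 = r" "Dr r (Suc 0) = r" by (simp_all add: Dr_def)

lemma loc_infsum_bound_f:
  assumes p: "p \<ge> 2" and ab1: "\<bar>a - b\<bar> \<le> 1 / real p" and ab: "\<bar>a\<bar> + \<bar>b\<bar> \<le> 1"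
  shows "infsum (\<lambda>k. norm (loc z p a b 1 k)) UNIV \<le> 1 + (norm z + 4 * 2 powr norm z) / real p ^ 2"
proof -
  define r where "r = norm z"
  have r: "r \<ge> 0" by (simp add: r_def)
  define h where "h k = (if k = 0 then 1 else 0) + ((if k = 1 then r / real p ^ 2 else 0)
                    + 4 / real p ^ 2 * (Dr r k * (1/2) ^ k))" for k :: nat
  have hs: "(h has_sum (1 + (r / real p ^ 2 + 4 / real p ^ 2 * 2 powr r))) UNIV"
    unfolding h_def
    by (intro has_sum_add has_sum_cmult_right Dr_half_has_sum r has_sum_single_at)
  have le: "norm (loc z p a b 1 k) \<le> h k" for k
  proof -
    consider "k = 0" | "k = 1" | "k \<ge> 2" by linarith
    then show ?thesis
    proof cases
      case 1
      then show ?thesis using Dr_nonneg[OF r, of 0] p by (simp add: h_def loc_def)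
    next
      case 2
      have "norm (loc z p a b 1 k) \<le> 1 / real p * (Dr r k * (1 / real p) ^ k)"
        using loc_norm_le[of k a b "1 / real p" p z 1] 2 ab1 p by (simp add: r_def)
      also have "\<dots> = r / real p ^ 2" using 2 by (simp add: Dr_one power2_eq_square)
      finally have "norm (loc z p a b 1 k) \<le> r / real p ^ 2" .
      moreover have "0 \<le> 4 / real p ^ 2 * (Dr r k * (1/2) ^ k)"
        by (intro mult_nonneg_nonneg divide_nonneg_nonneg Dr_nonneg r) auto
      ultimately show ?thesis using 2 by (simp add: h_def)
    next
      case 3
      have ab': "\<bar>a + b * (-1) ^ k\<bar> \<le> 1"
        by (rule order.trans[OF abs_triangle_ineq]) (use ab in \<open>auto simp: abs_mult\<close>)
      have A: "norm (loc z p a b 1 k) \<le> Dr r k * (1 / real p) ^ k"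
        using loc_norm_le[of k a b 1 p z 1] 3 ab' p by (simp add: r_def)
      have "(1 / real p) ^ k = (1 / real p) ^ 2 * (1 / real p) ^ (k - 2)"
      proof -
        have "k = 2 + (k - 2)" using 3 by simp
        then show ?thesis by (metis power_add)
      qed
      also have "\<dots> \<le> (1 / real p) ^ 2 * (1/2) ^ (k - 2)"
        by (intro mult_left_mono pow_le_half p) auto
      also have "\<dots> = 4 / real p ^ 2 * (1/2) ^ k"
        using 3 by (simp add: power_diff field_simps)
      finally have B: "(1 / real p) ^ k \<le> 4 / real p ^ 2 * (1/2) ^ k" .
      have "norm (loc z p a b 1 k) \<le> Dr r k * (4 / real p ^ 2 * (1/2) ^ k)"
        by (rule order.trans[OF A mult_left_mono[OF B Dr_nonneg[OF r]]])
      then have "norm (loc z p a b 1 k) \<le> 4 / real p ^ 2 * (Dr r k * (1/2) ^ k)"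
        by (simp add: mult_ac)
      then show ?thesis using 3 by (simp add: h_def)
    qed
  qed
  have "infsum (\<lambda>k. norm (loc z p a b 1 k)) UNIV \<le> infsum h UNIV"
    by (rule infsum_mono[OF loc_norm_summable[OF p] has_sum_imp_summable[OF hs] le])
  also have "\<dots> = 1 + (r + 4 * 2 powr r) / real p ^ 2"
    using infsumI[OF hs] by (simp add: add_divide_distrib)
  finally show ?thesis by (simp add: r_def)
qed

lemma loc_infsum_bound_g:
  assumes p: "p \<ge> 2" and ab: "\<And>k. k \<ge> 1 \<Longrightarrow> \<bar>a + b * (-1) ^ k\<bar> \<le> 2 / real p"
  shows "infsum (\<lambda>k. norm (loc z p a b 0 k)) UNIV \<le> 4 * 2 powr norm z / real p ^ 2"
proof -
  define r where "r = norm z"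
  have r: "r \<ge> 0" by (simp add: r_def)
  define h where "h k = 4 / real p ^ 2 * (Dr r k * (1/2) ^ k)" for k :: nat
  have hs: "(h has_sum (4 / real p ^ 2 * 2 powr r)) UNIV"
    unfolding h_def by (intro has_sum_cmult_right Dr_half_has_sum r)
  have le: "norm (loc z p a b 0 k) \<le> h k" for k
  proof (cases "k = 0")
    case True
    then show ?thesis using Dr_nonneg[OF r, of 0] by (simp add: h_def loc_def)
  next
    case False
    then have k: "k \<ge> 1" by simp
    have "norm (loc z p a b 0 k) \<le> 2 / real p * (Dr r k * (1 / real p) ^ k)"
      using loc_norm_le[of k a b "2 / real p" p z 0] k ab[OF k] p by (simp add: r_def)
    also have "(1 / real p) ^ k = (1 / real p) * (1 / real p) ^ (k - 1)"
      using k by (simp flip: power_Suc)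
    also have "2 / real p * (Dr r k * ((1 / real p) * (1 / real p) ^ (k - 1)))
        \<le> 2 / real p * (Dr r k * ((1 / real p) * (1/2) ^ (k - 1)))"
      by (intro mult_left_mono pow_le_half p Dr_nonneg r) auto
    also have "\<dots> = h k"
      using k by (simp add: h_def power_diff field_simps power2_eq_square)
    finally show ?thesis .
  qed
  have "infsum (\<lambda>k. norm (loc z p a b 0 k)) UNIV \<le> infsum h UNIV"
    by (rule infsum_mono[OF loc_norm_summable[OF p] has_sum_imp_summable[OF hs] le])
  also have "\<dots> = 4 * 2 powr r / real p ^ 2"
    using infsumI[OF hs] by (simp add: field_simps)
  finally show ?thesis by (simp add: r_def)
qed

lemma summable_inv_sq: "summable (\<lambda>n. C / real n ^ 2)"
  using summable_mult[OF inverse_power_summable[of 2, where 'a=real], of C]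
  by (simp add: divide_inverse)



definition Ap :: "nat \<Rightarrow> real" where "Ap p = (real p - 1)^2 / (2 * real p * (real p + 1))"
definition Bp :: "nat \<Rightarrow> real" where "Bp p = (real p - 1) / (2 * real p)"
definition ad :: "nat \<Rightarrow> real" where
  "ad p = (if p = 2 then -(13/72) * ln 2 else -(2 * ln (real p) / (real p + 1)^2))"
definition bd :: "nat \<Rightarrow> real" where "bd p = (if p = 2 then ln 2 / 8 else 0)"

definition fz :: "complex \<Rightarrow> nat \<Rightarrow> nat \<Rightarrow> complex" where "fz z p = loc z p (Ap p) (Bp p) 1"
definition gz :: "complex \<Rightarrow> nat \<Rightarrow> nat \<Rightarrow> complex" where "gz z p = loc z p (ad p) (bd p) 0"

lemma ApBp_sum0: fixes q :: real assumes "q \<ge> 2"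
  shows "(q - 1)^2 / (2 * q * (q + 1)) + (q - 1) / (2 * q) = (q - 1) / (q + 1)"
proof -
  have "q > 0" "q + 1 > 0" using assms by auto
  then show ?thesis by (simp add: divide_simps power2_eq_square) (simp add: algebra_simps)
qed

lemma ApBp_diff0: fixes q :: real assumes "q \<ge> 2"
  shows "(q - 1)^2 / (2 * q * (q + 1)) - (q - 1) / (2 * q) = -((q - 1) / (q * (q + 1)))"
proof -
  have "q > 0" "q + 1 > 0" using assms by auto
  then show ?thesis by (simp add: divide_simps power2_eq_square) (simp add: algebra_simps)
qed

lemma ApBp_sum: "p \<ge> 2 \<Longrightarrow> 1 - Ap p - Bp p = 2 / (real p + 1)"
proof -
  assume "p \<ge> 2"
  then have d: "real p \<ge> 2" by auto
  have "Ap p + Bp p = (real p - 1) / (real p + 1)"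
    unfolding Ap_def Bp_def by (rule ApBp_sum0[OF d])
  moreover have "1 - (real p - 1) / (real p + 1) = 2 / (real p + 1)"
    using d by (simp add: field_simps)
  ultimately show ?thesis by simp
qed

lemma ApBp_bounds:
  assumes "p \<ge> 2"
  shows "\<bar>Ap p - Bp p\<bar> \<le> 1 / real p" "\<bar>Ap p\<bar> + \<bar>Bp p\<bar> \<le> 1"
proof -
  have p: "real p \<ge> 2" using assms by simp
  have A: "Ap p \<ge> 0" "Bp p \<ge> 0" using p by (auto simp: Ap_def Bp_def)
  have "Ap p - Bp p = -((real p - 1) / (real p * (real p + 1)))"
    unfolding Ap_def Bp_def by (rule ApBp_diff0[OF p])
  moreover have "(real p - 1) / (real p * (real p + 1)) \<le> 1 / real p"
  proof -
    have "(real p - 1) / (real p * (real p + 1)) \<le> real p / (real p * (real p + 1))"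
      by (intro divide_right_mono) (use p in auto)
    also have "\<dots> = 1 / (real p + 1)" using p by simp
    also have "\<dots> \<le> 1 / real p" by (intro divide_left_mono) (use p in auto)
    finally show ?thesis .
  qed
  moreover have "(real p - 1) / (real p * (real p + 1)) \<ge> 0" using p by simp
  ultimately show "\<bar>Ap p - Bp p\<bar> \<le> 1 / real p" by simp
  have "Ap p + Bp p = 1 - 2 / (real p + 1)" using ApBp_sum[OF assms] by simp
  also have "\<dots> \<le> 1" using p by simp
  finally show "\<bar>Ap p\<bar> + \<bar>Bp p\<bar> \<le> 1" using A by simp
qed

lemma fz_has_sum:
  assumes "p \<ge> 2"
  shows "(fz z p has_sum EXp p z) UNIV"
proof -
  have "(fz z p has_sum (of_real (Ap p) * of_real (1 - 1 / real p) powr (-z)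
            + of_real (Bp p) * of_real (1 + 1 / real p) powr (-z) + (1 - of_real (Ap p) - of_real (Bp p)))) UNIV"
    unfolding fz_def by (rule loc_has_sum[OF assms])
  moreover have "(1 - of_real (Ap p) - of_real (Bp p) :: complex) = of_real (2 / (real p + 1))"
    using ApBp_sum[OF assms] by (metis of_real_1 of_real_diff)
  ultimately show ?thesis unfolding EXp_def Ap_def Bp_def by simp
qed

lemma gz_has_sum_odd:
  assumes "p \<ge> 3"
  shows "(gz z p has_sum aphi p z) UNIV"
proof -
  have "(gz z p has_sum (of_real (ad p) * of_real (1 - 1 / real p) powr (-z)
            + of_real (bd p) * of_real (1 + 1 / real p) powr (-z) + (0 - of_real (ad p) - of_real (bd p)))) UNIV"
    unfolding gz_def by (rule loc_has_sum) (use assms in auto)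
  moreover have "of_real (ad p) * X + of_real (bd p) * Y + (0 - of_real (ad p) - of_real (bd p))
       = of_real (- ad p) * (1 - X)" for X Y :: complex
    using assms by (simp add: bd_def algebra_simps)
  moreover have "- ad p = 2 * ln (real p) / (real p + 1)^2" using assms by (simp add: ad_def)
  ultimately show ?thesis unfolding aphi_def by simp
qed

lemma gz_has_sum_2:
  "(gz z 2 has_sum (of_real (ad 2) * (of_real (1 - 1 / real 2) powr (-z) - 1)
        + of_real (bd 2) * (of_real (1 + 1 / real 2) powr (-z) - 1))) UNIV"
proof -
  have "(gz z 2 has_sum (of_real (ad 2) * of_real (1 - 1 / real 2) powr (-z)
            + of_real (bd 2) * of_real (1 + 1 / real 2) powr (-z) + (0 - of_real (ad 2) - of_real (bd 2)))) UNIV"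
    unfolding gz_def by (rule loc_has_sum) auto
  moreover have "of_real a * X + of_real b * Y + (0 - of_real a - of_real b)
       = of_real a * (X - 1) + of_real b * (Y - 1)" for X Y :: complex and a b :: real
    by (simp add: algebra_simps)
  ultimately show ?thesis by simp
qed

lemma adbd_bound:
  assumes "p \<ge> 2"
  shows "\<bar>ad p + bd p * (-1) ^ k\<bar> \<le> 2 / real p"
proof (cases "p = 2")
  case True
  have l: "ln (2::real) < 1" by (rule ln_2_less_1)
  have l0: "ln (2::real) > 0" by simp
  have "\<bar>ad p + bd p * (-1) ^ k\<bar> \<le> \<bar>ad p\<bar> + \<bar>bd p\<bar>"
    by (rule order.trans[OF abs_triangle_ineq]) (auto simp: abs_mult)
  also have "\<dots> = (13/72) * ln 2 + ln 2 / 8" using True l0 by (simp add: ad_def bd_def abs_mult)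
  also have "\<dots> \<le> 1" using l by simp
  finally show ?thesis using True by simp
next
  case False
  have p: "real p \<ge> 2" using assms by simp
  have ln: "ln (real p) \<le> real p" by (rule ln_bound) (use p in simp)
  have l0: "ln (real p) \<ge> 0" using p by simp
  have "2 * ln (real p) / (real p + 1)^2 \<le> 2 * real p / (real p + 1)^2"
    by (intro divide_right_mono) (use ln in auto)
  also have "\<dots> \<le> 2 * real p / (real p * real p)"
  proof (intro divide_left_mono)
    show "real p * real p \<le> (real p + 1)^2" using p by (simp add: power2_eq_square algebra_simps)
  qed (use p in auto)
  also have "\<dots> = 2 / real p" using p by simp
  finally have "2 * ln (real p) / (real p + 1)^2 \<le> 2 / real p" .
  then show ?thesis using False l0 by (simp add: ad_def bd_def)
qed

definition \<beta>z :: "complex \<Rightarrow> nat \<Rightarrow> real" where "\<beta>z z n = (norm z + 4 * 2 powr norm z) / real n ^ 2"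
definition \<gamma>z :: "complex \<Rightarrow> nat \<Rightarrow> real" where "\<gamma>z z n = 4 * 2 powr norm z / real n ^ 2"

lemma fz_props:
  "fz z p 0 = 1"
  "prime p \<Longrightarrow> (\<lambda>k. norm (fz z p k)) summable_on UNIV"
  "prime p \<Longrightarrow> infsum (\<lambda>k. norm (fz z p k)) UNIV \<le> 1 + \<beta>z z p"
  "summable (\<beta>z z)" "\<beta>z z n \<ge> 0"
proof -
  show "fz z p 0 = 1" by (simp add: fz_def loc_def)
  show "prime p \<Longrightarrow> (\<lambda>k. norm (fz z p k)) summable_on UNIV"
    unfolding fz_def by (rule loc_norm_summable) (simp add: prime_ge_2_nat)
  show "prime p \<Longrightarrow> infsum (\<lambda>k. norm (fz z p k)) UNIV \<le> 1 + \<beta>z z p"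
    unfolding fz_def \<beta>z_def
    by (rule loc_infsum_bound_f; use ApBp_bounds prime_ge_2_nat in blast)
  show "summable (\<beta>z z)" unfolding \<beta>z_def by (rule summable_inv_sq)
  show "\<beta>z z n \<ge> 0" unfolding \<beta>z_def by (intro divide_nonneg_nonneg add_nonneg_nonneg) auto
qed

lemma gz_props:
  "gz z p 0 = 0"
  "prime p \<Longrightarrow> (\<lambda>k. norm (gz z p k)) summable_on UNIV"
  "prime p \<Longrightarrow> infsum (\<lambda>k. norm (gz z p k)) UNIV \<le> \<gamma>z z p"
  "summable (\<gamma>z z)" "\<gamma>z z n \<ge> 0"
proof -
  show "gz z p 0 = 0" by (simp add: gz_def loc_def)
  show "prime p \<Longrightarrow> (\<lambda>k. norm (gz z p k)) summable_on UNIV"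
    unfolding gz_def by (rule loc_norm_summable) (simp add: prime_ge_2_nat)
  show "prime p \<Longrightarrow> infsum (\<lambda>k. norm (gz z p k)) UNIV \<le> \<gamma>z z p"
    unfolding gz_def \<gamma>z_def
    by (rule loc_infsum_bound_g; use adbd_bound prime_ge_2_nat in blast)
  show "summable (\<gamma>z z)" unfolding \<gamma>z_def by (rule summable_inv_sq)
  show "\<gamma>z z n \<ge> 0" unfolding \<gamma>z_def by (intro divide_nonneg_nonneg) auto
qed



lemma zeta_alt: "zeta s = (\<Sum>n. of_nat (Suc n) powr (-s))"
  unfolding zeta_def by (simp add: powr_minus_divide)

lemma zeta_deriv_2: "(zeta has_field_derivative deriv zeta 2) (at 2)"
proof -
  define S where "S = ball (2::complex) (1/2)"
  define f where "f n s = of_nat (Suc n) powr (-s)" for n :: nat and s :: complex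
  define f' where "f' n s = Ln (of_nat (Suc n)) * of_nat (Suc n) powr (-s) * (-1)" for n :: nat and s :: complex
  have hfd: "(f n has_field_derivative f' n x) (at x)" for n x
  proof -
    have nz: "(of_nat (Suc n) :: complex) \<noteq> 0" by (simp del: of_nat_Suc)
    have d1: "((\<lambda>w. of_nat (Suc n) powr w) has_field_derivative Ln (of_nat (Suc n)) * of_nat (Suc n) powr (-x)) (at (-x))"
      by (rule has_field_derivative_powr_right[OF nz])
    have d2: "((\<lambda>s. -s) has_field_derivative -1) (at x)" by (auto intro!: derivative_eq_intros)
    show ?thesis unfolding f_def f'_def using DERIV_chain2[OF d1 d2] by simp
  qed
  have hs: "summable (\<lambda>n. real (Suc n) powr (-3/2))"
    using summable_real_powr_iff[of "-3/2"] summable_Suc_iff[of "\<lambda>n. real n powr (-3/2)"] by simp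
  have bnd: "\<forall>\<^sub>F n in sequentially. \<forall>x\<in>S. norm (f n x) \<le> real (Suc n) powr (-3/2)"
  proof (intro always_eventually allI ballI)
    fix n x assume x: "x \<in> S"
    have "\<bar>Re x - 2\<bar> \<le> cmod (x - 2)" using abs_Re_le_cmod[of "x - 2"] by simp
    also have "\<dots> < 1/2" using x by (simp add: S_def dist_norm norm_minus_commute)
    finally have rx: "Re x \<ge> 3/2" by linarith
    have "norm (f n x) = real (Suc n) powr Re (-x)"
      unfolding f_def by (subst norm_powr_real_powr) auto
    also have "\<dots> \<le> real (Suc n) powr (-3/2)"
      by (intro powr_mono) (use rx in auto)
    finally show "norm (f n x) \<le> real (Suc n) powr (-3/2)" .
  qed
  obtain g g' where gg: "\<forall>x \<in> S. ((\<lambda>n. f n x) sums g x) \<and> ((\<lambda>n. f' n x) sums g' x) \<and> (g has_field_derivative g' x) (at x)"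
    using series_and_derivative_comparison[OF _ hs hfd bnd] unfolding S_def by auto
  have eq: "\<forall>x\<in>S. g x = zeta x"
    using gg unfolding zeta_alt f_def by (auto simp: sums_iff)
  have "2 \<in> S" by (simp add: S_def)
  have d: "(g has_field_derivative g' 2) (at 2)" using gg \<open>2 \<in> S\<close> by blast
  have "(zeta has_field_derivative g' 2) (at 2)"
    by (rule has_field_derivative_transform_within_open[OF d _ \<open>2 \<in> S\<close>])
       (simp add: S_def, use eq in blast)
  then show ?thesis using DERIV_imp_deriv by metis
qed

lemma zeta_2_nonzero: "zeta 2 \<noteq> 0"
proof -
  have t: "1 / of_nat (Suc n) powr (2::complex) = of_real (1 / real (Suc n) powr 2)" for n
  proof -
    have "of_nat (Suc n) powr (2::complex) = of_real (real (Suc n)) powr (of_real 2)" by simp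
    also have "\<dots> = of_real (real (Suc n) powr 2)" by (rule powr_of_real) simp
    finally show ?thesis by simp
  qed
  have hs: "summable (\<lambda>n. 1 / real (Suc n) powr 2)"
    using summable_real_powr_iff[of "-2"] summable_Suc_iff[of "\<lambda>n. real n powr (-2)"]
    by (simp add: powr_minus_divide)
  have "zeta 2 = (\<Sum>n. of_real (1 / real (Suc n) powr 2))"
    unfolding zeta_def t by simp
  also have "\<dots> = of_real (\<Sum>n. 1 / real (Suc n) powr 2)"
    by (rule suminf_of_real[OF hs, symmetric])
  finally have z: "zeta 2 = of_real (\<Sum>n. 1 / real (Suc n) powr 2)" .
  have "(\<Sum>n. 1 / real (Suc n) powr 2) > 0"
    by (rule suminf_pos[OF hs]) simp
  then show ?thesis unfolding z by simp
qed



definition kap :: "nat \<Rightarrow> complex \<Rightarrow> complex" where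
  "kap k s = (-1) ^ k / 2 * ((8 powr s + 4 powr s) / (8 powr s + 2 powr s + 2))
       * (1 + 2 * (1 + (-1) ^ k) / (4 powr s * (2 powr s - 1)))"

definition evf :: "nat \<Rightarrow> complex \<Rightarrow> complex" where
  "evf p s = (1 - 2 / of_nat p) * (1 + 2 * (of_nat p - 1) / ((of_nat p - 2) * (of_nat p powr s - 1)))"

definition Dn :: "nat \<Rightarrow> complex \<Rightarrow> complex" where
  "Dn p s = 1 + 2 / (of_nat p powr s - 1)"

definition numf :: "nat \<Rightarrow> nat \<Rightarrow> complex \<Rightarrow> complex" where
  "numf p k s = (if p = 2 then kap k s else if odd k then -1 / of_nat p else evf p s)"

definition gp :: "nat \<Rightarrow> nat \<Rightarrow> complex \<Rightarrow> complex" where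
  "gp p k s = numf p k s / Dn p s"

lemma pf_prod_distinct_primes:
  assumes "finite A" "\<And>p. p \<in> A \<Longrightarrow> prime (p::nat)"
  shows "prime_factors (\<Prod>A) = A"
proof -
  have "prime_factors (prod id A) = \<Union>((prime_factors \<circ> id) ` A)"
    by (rule prime_factors_prod) (use assms in \<open>auto dest: prime_gt_0_nat\<close>)
  also have "\<dots> = A" using assms by (auto simp: prime_factorization_prime)
  finally show ?thesis by simp
qed

lemma hm_prod:
  assumes m: "m > 0"
  shows "hm m s = (\<Prod>p\<in>prime_factors m. gp p (multiplicity p m) s)"
proof -
  define P where "P = prime_factors m"
  define Od where "Od = odd_exp_primes m"
  define Ev where "Ev = even_exp_primes m"
  define Tw where "Tw = P \<inter> {2}"
  have fin: "finite P" "finite Od" "finite Ev" "finite Tw"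
    by (auto simp: P_def Od_def Ev_def Tw_def odd_exp_primes_def even_exp_primes_def)
  have PU: "P = Tw \<union> (Od \<union> Ev)"
    by (auto simp: P_def Od_def Ev_def Tw_def odd_exp_primes_def even_exp_primes_def)
  have disj: "Tw \<inter> (Od \<union> Ev) = {}" "Od \<inter> Ev = {}"
    by (auto simp: P_def Od_def Ev_def Tw_def odd_exp_primes_def even_exp_primes_def)
  have Odprime: "\<And>p. p \<in> Od \<Longrightarrow> prime p" by (auto simp: Od_def odd_exp_primes_def)
  have "(\<Prod>p\<in>P. gp p (multiplicity p m) s) = (\<Prod>p\<in>P. numf p (multiplicity p m) s) / (\<Prod>p\<in>P. Dn p s)"
    unfolding gp_def by (rule prod_dividef)
  also have "(\<Prod>p\<in>P. numf p (multiplicity p m) s) =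
      (\<Prod>p\<in>Tw. numf p (multiplicity p m) s) * ((\<Prod>p\<in>Od. numf p (multiplicity p m) s) * (\<Prod>p\<in>Ev. numf p (multiplicity p m) s))"
    unfolding PU using fin disj by (simp add: prod.union_disjoint)
  also have "(\<Prod>p\<in>Tw. numf p (multiplicity p m) s) = kappa m s"
  proof (cases "odd m")
    case True
    then have "Tw = {}" unfolding Tw_def P_def by (auto simp: in_prime_factors_iff)
    then show ?thesis using True by (simp add: kappa_def)
  next
    case False
    then have "Tw = {2}" unfolding Tw_def P_def using m by (auto simp: in_prime_factors_iff)
    then show ?thesis using False by (simp add: kappa_def numf_def kap_def e1_def)
  qed
  also have "(\<Prod>p\<in>Od. numf p (multiplicity p m) s) = (\<Prod>p\<in>Od. -1 / of_nat p)"
    by (rule prod.cong) (auto simp: Od_def odd_exp_primes_def numf_def)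
  also have "\<dots> = (-1) ^ card (prime_factors (m0 m)) / of_nat (m0 m)"
  proof -
    have "(\<Prod>p\<in>Od. -1 / (of_nat p :: complex)) = (\<Prod>p\<in>Od. -1) / (\<Prod>p\<in>Od. of_nat p)"
      by (rule prod_dividef)
    also have "(\<Prod>p\<in>Od. -1 :: complex) = (-1) ^ card Od" by simp
    also have "(\<Prod>p\<in>Od. of_nat p :: complex) = of_nat (m0 m)"
      by (simp add: m0_def Od_def)
    also have "card Od = card (prime_factors (m0 m))"
      using pf_prod_distinct_primes[OF fin(2) Odprime] by (simp add: m0_def Od_def)
    finally show ?thesis .
  qed
  also have "(\<Prod>p\<in>Ev. numf p (multiplicity p m) s) = (\<Prod>p\<in>Ev. evf p s)"
    by (rule prod.cong) (auto simp: Ev_def even_exp_primes_def numf_def)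
  finally have "(\<Prod>p\<in>P. gp p (multiplicity p m) s) =
      kappa m s * ((-1) ^ card (prime_factors (m0 m)) / of_nat (m0 m) * (\<Prod>p\<in>Ev. evf p s)) / (\<Prod>p\<in>P. Dn p s)" .
  moreover have "hm m s = (-1) ^ card (prime_factors (m0 m)) / of_nat (m0 m) * ((\<Prod>p\<in>Ev. evf p s) / (\<Prod>p\<in>P. Dn p s)) * kappa m s"
    unfolding hm_def evf_def Dn_def Ev_def P_def by simp
  ultimately show ?thesis unfolding P_def by (simp add: field_simps)
qed



lemma cancel_sq: fixes a b c :: complex assumes "b \<noteq> 0" "c \<noteq> 0"
  shows "(a / b^2) / (c^2 / b^2) = a / c^2"
  using assms by (simp add: field_simps)

lemma alg_odd_odd: fixes q L :: complex assumes "q \<noteq> 0" "q - 1 \<noteq> 0" "q + 1 \<noteq> 0"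
  shows "(0 * (1 + 2 / (q - 1)) - (-1 / q) * (-(2 * (q * L)) / (q - 1)^2)) / ((1 + 2 / (q - 1)) * (1 + 2 / (q - 1)))
         = -(2 * L / (q + 1)^2)"
proof -
  have e: "1 + 2 / (q - 1) = (q + 1) / (q - 1)" using assms by (simp add: field_simps)
  have n: "0 * (1 + 2 / (q - 1)) - (-1 / q) * (-(2 * (q * L)) / (q - 1)^2) = (- 2 * L) / (q - 1)^2"
    using assms by (simp add: field_simps)
  have d: "(1 + 2 / (q - 1)) * (1 + 2 / (q - 1)) = (q + 1)^2 / (q - 1)^2"
    unfolding e by (simp add: power2_eq_square)
  show ?thesis unfolding n d using cancel_sq[of "q - 1" "q + 1" "-2 * L"] assms by simp
qed

lemma alg_odd_even: fixes q L :: complex assumes "q \<noteq> 0" "q - 1 \<noteq> 0" "q + 1 \<noteq> 0" "q - 2 \<noteq> 0"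
  shows "((1 - 2 / q) * (-(2 * (q - 1) / (q - 2) * (q * L)) / (q - 1)^2) * (1 + 2 / (q - 1))
          - ((1 - 2 / q) * (1 + 2 * (q - 1) / ((q - 2) * (q - 1)))) * (-(2 * (q * L)) / (q - 1)^2))
          / ((1 + 2 / (q - 1)) * (1 + 2 / (q - 1)))
         = -(2 * L / (q + 1)^2)"
proof -
  have e: "1 + 2 / (q - 1) = (q + 1) / (q - 1)" using assms by (simp add: field_simps)
  have e1: "1 - 2 / q = (q - 2) / q" using assms by (simp add: field_simps)
  have e2: "(1 - 2 / q) * (1 + 2 * (q - 1) / ((q - 2) * (q - 1))) = 1"
  proof -
    have c: "2 * (q - 1) / ((q - 2) * (q - 1)) = 2 / (q - 2)"
      using assms by (rule_tac nonzero_mult_divide_mult_cancel_right) simp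
    have "1 + 2 * (q - 1) / ((q - 2) * (q - 1)) = q / (q - 2)" unfolding c using assms by (simp add: field_simps)
    then show ?thesis unfolding e1 using assms by simp
  qed
  have e3: "(1 - 2 / q) * (-(2 * (q - 1) / (q - 2) * (q * L)) / (q - 1)^2) = -(2 * L * (q - 1)) / (q - 1)^2"
    unfolding e1 using assms by (simp add: field_simps)
  have n: "-(2 * L * (q - 1)) / (q - 1)^2 * ((q + 1) / (q - 1)) - 1 * (-(2 * (q * L)) / (q - 1)^2)
        = (-2 * L) / (q - 1)^2"
  proof -
    have "-(2 * L * (q - 1)) / (q - 1)^2 * ((q + 1) / (q - 1)) = -(2 * L * (q + 1)) / (q - 1)^2"
      using assms by (simp add: power2_eq_square)
    then show ?thesis by (simp add: diff_divide_distrib[symmetric] add_divide_distrib[symmetric] algebra_simps)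
  qed
  have d: "(1 + 2 / (q - 1)) * (1 + 2 / (q - 1)) = (q + 1)^2 / (q - 1)^2"
    unfolding e by (simp add: power2_eq_square)
  show ?thesis unfolding e2 e3 d unfolding e n using cancel_sq[of "q - 1" "q + 1" "-2 * L"] assms by simp
qed

lemma powr_right_eqI:
  fixes w :: complex
  assumes "w \<noteq> 0" "(g has_field_derivative g') (at x within S)" "D = Ln w * w powr g x * g'"
  shows "((\<lambda>s. w powr g s) has_field_derivative D) (at x within S)"
  using DERIV_chain2[OF has_field_derivative_powr_right[OF assms(1)] assms(2)] assms(3) by simp

definition L2 :: complex where "L2 = of_real (ln 2)"

lemma Ln_2: "Ln (2::complex) = L2"
  using Ln_of_real[of 2] by (simp add: L2_def)
lemma Ln_4: "Ln (4::complex) = 2 * L2"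
proof -
  have "Ln (4::complex) = of_real (ln 4)" using Ln_of_real[of 4] by simp
  also have "ln (4::real) = ln (2^2)" by simp
  also have "\<dots> = 2 * ln 2" by (subst ln_realpow) auto
  finally show ?thesis by (simp add: L2_def)
qed
lemma Ln_8: "Ln (8::complex) = 3 * L2"
proof -
  have "Ln (8::complex) = of_real (ln 8)" using Ln_of_real[of 8] by simp
  also have "ln (8::real) = ln (2^3)" by simp
  also have "\<dots> = 3 * ln 2" by (subst ln_realpow) auto
  finally show ?thesis by (simp add: L2_def)
qed

definition Fr :: "complex \<Rightarrow> complex" where
  "Fr s = (8 powr s + 2 powr s + 2) / (8 powr s + 4 powr s)"

lemma Fr_deriv: "(Fr has_field_derivative -(L2 / 2)) (at 1)"
  unfolding Fr_def
  by (auto intro!: derivative_eq_intros powr_right_eqI simp: Ln_2 Ln_4 Ln_8)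

definition R2 :: "complex \<Rightarrow> complex" where
  "R2 s = (8 powr s + 4 powr s) / (8 powr s + 2 powr s + 2)"

lemma R2_deriv: "(R2 has_field_derivative L2 / 2) (at 1)"
  unfolding R2_def
  by (auto intro!: derivative_eq_intros powr_right_eqI simp: Ln_2 Ln_4 Ln_8)

lemma W_deriv: "((\<lambda>s. 1 + 4 / (4 powr s * (2 powr s - 1))) has_field_derivative -(4 * L2)) (at (1::complex))"
  by (auto intro!: derivative_eq_intros powr_right_eqI simp: Ln_2 Ln_4 Ln_8)

lemma Dn2_deriv: "((\<lambda>s. 1 + 2 / (2 powr s - 1)) has_field_derivative -(4 * L2)) (at (1::complex))"
  by (auto intro!: derivative_eq_intros powr_right_eqI simp: Ln_2 Ln_4 Ln_8)


lemma Fr_1: "Fr 1 = 1" by (simp add: Fr_def)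

lemma Dn_deriv:
  assumes "p \<ge> 2"
  shows "(Dn p has_field_derivative -(2 * (of_nat p * Ln (of_nat p))) / (of_nat p - 1)^2) (at 1)"
proof -
  have "(of_nat p :: complex) \<noteq> 0" "(of_nat p :: complex) - 1 \<noteq> 0" using assms by auto
  then show ?thesis unfolding Dn_def
    by (auto intro!: derivative_eq_intros powr_right_eqI simp: power2_eq_square)
qed

lemma evf_deriv:
  assumes "p \<ge> 3"
  defines "q \<equiv> (of_nat p :: complex)"
  shows "(evf p has_field_derivative (1 - 2 / q) * (-(2 * (q - 1) / (q - 2) * (q * Ln q)) / (q - 1)^2)) (at 1)"
proof -
  have nz2: "q - 2 \<noteq> 0"
  proof
    assume "q - 2 = 0"
    then have "q = of_nat 2" by simp
    then have "p = 2" unfolding q_def by (simp only: of_nat_eq_iff)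
    with assms show False by simp
  qed
  have nz: "q \<noteq> 0" "q - 1 \<noteq> 0" "q - 2 \<noteq> 0" using assms nz2 by (auto simp: q_def)
  have e: "evf p = (\<lambda>s. (1 - 2 / q) * (1 + (2 * (q - 1) / (q - 2)) / (q powr s - 1)))"
    by (auto simp: evf_def q_def fun_eq_iff divide_divide_eq_left)
  show ?thesis unfolding e using nz
    by (auto intro!: derivative_eq_intros powr_right_eqI simp: power2_eq_square) (simp add: mult_ac)
qed



lemma evf1: fixes q :: complex assumes "q \<noteq> 0" "q - 1 \<noteq> 0" "q - 2 \<noteq> 0"
  shows "(1 - 2 / q) * (1 + 2 * (q - 1) / ((q - 2) * (q - 1))) = 1"
proof -
  have e1: "1 - 2 / q = (q - 2) / q" using assms by (simp add: field_simps)
  have c: "2 * (q - 1) / ((q - 2) * (q - 1)) = 2 / (q - 2)"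
    using assms by (rule_tac nonzero_mult_divide_mult_cancel_right) simp
  have "1 + 2 * (q - 1) / ((q - 2) * (q - 1)) = q / (q - 2)" unfolding c using assms by (simp add: field_simps)
  then show ?thesis unfolding e1 using assms by simp
qed

lemma odd_prime_nz:
  assumes "prime p" "p \<noteq> 2"
  shows "(of_nat p :: complex) \<noteq> 0" "(of_nat p :: complex) - 1 \<noteq> 0" "(of_nat p :: complex) - 2 \<noteq> 0"
        "(of_nat p :: complex) + 1 \<noteq> 0" "p \<ge> 3"
proof -
  have p2: "p \<ge> 2" using prime_ge_2_nat[OF assms(1)] .
  show p3: "p \<ge> 3" using p2 assms(2) by simp
  show "(of_nat p :: complex) \<noteq> 0" "(of_nat p :: complex) - 1 \<noteq> 0" using p2 by auto
  show "(of_nat p :: complex) + 1 \<noteq> 0"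
  proof
    assume "(of_nat p :: complex) + 1 = 0"
    then show False by (metis of_nat_Suc of_nat_eq_0_iff Suc_neq_Zero add.commute)
  qed
  show "(of_nat p :: complex) - 2 \<noteq> 0"
  proof
    assume "(of_nat p :: complex) - 2 = 0"
    then have "(of_nat p :: complex) = of_nat 2" by simp
    then have "p = 2" by (simp only: of_nat_eq_iff)
    with assms show False by simp
  qed
qed

lemma gp_val:
  assumes p: "prime p" and k: "k \<ge> 1"
  shows "gp p k 1 = of_real (Ap p + Bp p * (-1) ^ k)"
proof (cases "p = 2")
  case True
  show ?thesis
  proof (cases "even k")
    case True
    then show ?thesis using \<open>p = 2\<close>
      by (simp add: gp_def numf_def kap_def Dn_def Ap_def Bp_def)
  next
    case False
    then show ?thesis using \<open>p = 2\<close>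
      by (simp add: gp_def numf_def kap_def Dn_def Ap_def Bp_def)
  qed
next
  case False
  note nz = odd_prime_nz[OF p False]
  define q where "q = (of_nat p :: complex)"
  have nzq: "q \<noteq> 0" "q - 1 \<noteq> 0" "q - 2 \<noteq> 0" "q + 1 \<noteq> 0" using nz by (auto simp: q_def)
  have D1: "Dn p 1 = (q + 1) / (q - 1)" using nzq by (simp add: Dn_def q_def field_simps)
  have pr: "real p \<ge> 2" using nz by simp
  show ?thesis
  proof (cases "even k")
    case True
    have "evf p 1 = 1" using evf1[OF nzq(1-3)] by (simp add: evf_def q_def)
    then have "gp p k 1 = (q - 1) / (q + 1)" using True False nzq D1 by (simp add: gp_def numf_def)
    moreover have "Ap p + Bp p * (-1) ^ k = (real p - 1) / (real p + 1)"
      using ApBp_sum0[OF pr] True by (simp add: Ap_def Bp_def)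
    ultimately show ?thesis by (simp add: q_def)
  next
    case odd: False
    have "gp p k 1 = (-1 / q) / Dn p 1" using odd False by (simp add: gp_def numf_def q_def)
    also have "\<dots> = (-1 / q) / ((q + 1) / (q - 1))" by (simp only: D1)
    also have "\<dots> = -((q - 1) / (q * (q + 1)))" using nzq by (simp add: field_simps)
    finally have "gp p k 1 = -((q - 1) / (q * (q + 1)))" .
    moreover have "Ap p + Bp p * (-1) ^ k = -((real p - 1) / (real p * (real p + 1)))"
      using ApBp_diff0[OF pr] odd by (simp add: Ap_def Bp_def)
    ultimately show ?thesis by (simp add: q_def)
  qed
qed

lemma gp_deriv:
  assumes p: "prime p" and k: "k \<ge> 1"
  shows "(gp p k has_field_derivative of_real (ad p + bd p * (-1) ^ k)) (at 1)"
proof (cases "p = 2")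
  case True
  have l2: "of_real (ln 2) = L2" by (simp add: L2_def)
  show ?thesis
  proof (cases "even k")
    case ev: True
    have e: "gp p k = (\<lambda>s. (1 / 2 * ((8 powr s + 4 powr s) / (8 powr s + 2 powr s + 2))
         * (1 + 4 / (4 powr s * (2 powr s - 1)))) / (1 + 2 / (2 powr s - 1)))"
      using ev True by (simp add: fun_eq_iff gp_def numf_def kap_def Dn_def)
    have "(gp p k has_field_derivative -(L2 / 18)) (at 1)"
      unfolding e by (auto intro!: derivative_eq_intros powr_right_eqI simp: Ln_2 Ln_4 Ln_8)
    moreover have "of_real (ad p + bd p * (-1) ^ k) = -(L2 / 18)"
      using ev True by (simp add: ad_def bd_def L2_def)
    ultimately show ?thesis by simp
  next
    case od: False
    have e: "gp p k = (\<lambda>s. (- 1 / 2 * ((8 powr s + 4 powr s) / (8 powr s + 2 powr s + 2))) / (1 + 2 / (2 powr s - 1)))"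
      using od True by (simp add: fun_eq_iff gp_def numf_def kap_def Dn_def)
    have "(gp p k has_field_derivative -(11 * L2 / 36)) (at 1)"
      unfolding e by (auto intro!: derivative_eq_intros powr_right_eqI simp: Ln_2 Ln_4 Ln_8)
    moreover have "of_real (ad p + bd p * (-1) ^ k) = -(11 * L2 / 36)"
      using od True by (simp add: ad_def bd_def L2_def)
    ultimately show ?thesis by simp
  qed
next
  case False
  note nz = odd_prime_nz[OF p False]
  define q where "q = (of_nat p :: complex)"
  have nzq: "q \<noteq> 0" "q - 1 \<noteq> 0" "q - 2 \<noteq> 0" "q + 1 \<noteq> 0" using nz by (auto simp: q_def)
  have Dd: "(Dn p has_field_derivative -(2 * (q * Ln q)) / (q - 1)^2) (at 1)"
    unfolding q_def by (rule Dn_deriv) (use nz in simp)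
  have D1: "Dn p 1 = 1 + 2 / (q - 1)" by (simp add: Dn_def q_def)
  have D1nz: "Dn p 1 \<noteq> 0" using nzq by (simp add: D1 field_simps)
  have Lq: "Ln q = of_real (ln (real p))" unfolding q_def using Ln_of_real[of "real p"] nz by simp
  have target: "of_real (ad p + bd p * (-1) ^ k) = -(2 * Ln q / (q + 1)^2)"
    unfolding Lq using False by (simp add: ad_def bd_def q_def)
  show ?thesis
  proof (cases "even k")
    case ev: True
    have e: "gp p k = (\<lambda>s. evf p s / Dn p s)" using ev False by (simp add: fun_eq_iff gp_def numf_def)
    have E: "(evf p has_field_derivative (1 - 2 / q) * (-(2 * (q - 1) / (q - 2) * (q * Ln q)) / (q - 1)^2)) (at 1)"
      unfolding q_def by (rule evf_deriv) (use nz in simp)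
    have E1: "evf p 1 = (1 - 2 / q) * (1 + 2 * (q - 1) / ((q - 2) * (q - 1)))" by (simp add: evf_def q_def)
    have "(gp p k has_field_derivative
        ((1 - 2 / q) * (-(2 * (q - 1) / (q - 2) * (q * Ln q)) / (q - 1)^2) * Dn p 1
          - evf p 1 * (-(2 * (q * Ln q)) / (q - 1)^2)) / (Dn p 1 * Dn p 1)) (at 1)"
      unfolding e by (rule DERIV_divide[OF E Dd D1nz])
    then show ?thesis unfolding E1 D1 alg_odd_even[OF nzq(1,2,4,3)] target .
  next
    case od: False
    have e: "gp p k = (\<lambda>s. (-1 / q) / Dn p s)" using od False by (simp add: fun_eq_iff gp_def numf_def q_def)
    have "(gp p k has_field_derivative
        (0 * Dn p 1 - (-1 / q) * (-(2 * (q * Ln q)) / (q - 1)^2)) / (Dn p 1 * Dn p 1)) (at 1)"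
      unfolding e by (rule DERIV_divide[OF DERIV_const Dd D1nz])
    then show ?thesis unfolding D1 alg_odd_odd[OF nzq(1,2,4)] target .
  qed
qed



lemma suc_sums:
  fixes a :: "nat \<Rightarrow> 'a::{topological_comm_monoid_add,t2_space}"
  assumes "(a has_sum S) {0<..}"
  shows "(\<lambda>m. a (Suc m)) sums S"
proof -
  have bij: "bij_betw Suc UNIV {0<..}"
    by (rule bij_betwI[where g="\<lambda>n. n - 1"]) auto
  have "((\<lambda>m. a (Suc m)) has_sum S) UNIV"
    using has_sum_reindex_bij_betw[OF bij, of a] assms by simp
  then show ?thesis by (rule has_sum_imp_sums)
qed

lemma local_bound:
  fixes f :: "nat \<Rightarrow> 'a::{real_normed_field,banach}"
  assumes f0: "f 0 = 1" and fs: "(\<lambda>k. norm (f k)) summable_on UNIV"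
    and fb: "infsum (\<lambda>k. norm (f k)) UNIV \<le> 1 + b"
  shows "norm (infsum f UNIV - 1) \<le> b"
proof -
  have s: "f summable_on UNIV" using Infinite_Sum.abs_summable_summable[OF fs] .
  have s': "(\<lambda>k. norm (f k)) summable_on (UNIV - {0})"
    using fs by (rule summable_on_subset_banach) auto
  have "infsum f UNIV - 1 = infsum f (UNIV - {0})"
    using infsum_Diff[OF s summable_on_finite[of "{0}"]] f0 by simp
  then have "norm (infsum f UNIV - 1) \<le> infsum (\<lambda>k. norm (f k)) (UNIV - {0})"
    using norm_infsum_bound[OF s'] by simp
  also have "\<dots> = infsum (\<lambda>k. norm (f k)) UNIV - 1"
    using infsum_Diff[OF fs summable_on_finite[of "{0}"]] f0 by simp
  also have "\<dots> \<le> b" using fb by simp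
  finally show ?thesis .
qed

lemma conv_prod_bound:
  fixes F :: "nat \<Rightarrow> 'a::{real_normed_field,banach}"
  assumes "\<And>n. norm (F n - 1) \<le> \<beta> n" "summable \<beta>"
  shows "convergent_prod F"
  apply (rule abs_convergent_prod_imp_convergent_prod)
  apply (rule summable_imp_abs_convergent_prod)
  apply (rule summable_comparison_test'[OF assms(2)])
  using assms(1) by auto

lemma prodinf_split:
  fixes F :: "nat \<Rightarrow> 'a::{real_normed_field,banach}"
  assumes "\<And>n. norm (F n - 1) \<le> \<beta> n" "summable \<beta>" "\<And>n. \<beta> n \<ge> 0"
  shows "prodinf F = F n * prodinf (F(n := 1))"
proof -
  have c1: "convergent_prod (F(n := 1))"
    by (rule conv_prod_bound[OF _ assms(2)]) (use assms in auto)
  have c2: "convergent_prod (\<lambda>q. if q \<in> {n} then F q else 1)" by blast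
  have "prodinf (F(n := 1)) * prodinf (\<lambda>q. if q \<in> {n} then F q else 1)
      = prodinf (\<lambda>q. (F(n := 1)) q * (if q \<in> {n} then F q else 1))"
    by (rule prodinf_mult[OF c1 c2])
  also have "(\<lambda>q. (F(n := 1)) q * (if q \<in> {n} then F q else 1)) = F" by (auto simp: fun_eq_iff)
  also have "prodinf (\<lambda>q. if q \<in> {n} then F q else 1) = F n"
    by (subst prodinf_finite[of "{n}"]) auto
  finally have "prodinf (F(n := 1)) * F n = prodinf F" .
  then show ?thesis by (metis mult.commute)
qed

lemma powr_half: "complex_of_real (1 - 1 / real 2) powr (-z) = 2 powr z"
proof -
  have "complex_of_real (1 - 1 / real 2) = inverse 2" by simp
  moreover have "Ln (inverse (2::complex)) = - Ln 2"
    by (rule Ln_inverse) (simp add: complex_nonpos_Reals_iff)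
  ultimately show ?thesis by (simp add: powr_def)
qed

lemma powr_threehalf: "complex_of_real (1 + 1 / real 2) powr (-z) = (2/3) powr z"
proof -
  have "complex_of_real (1 + 1 / real 2) = inverse (2/3)" by simp
  moreover have "Ln (inverse (2/3::complex)) = - Ln (2/3)"
    by (rule Ln_inverse) (simp add: complex_nonpos_Reals_iff)
  ultimately show ?thesis by (simp add: powr_def)
qed

lemma EXp2_eq: "EXp 2 z = 2 powr z / 12 + (2/3) powr z / 4 + 2/3"
proof -
  have "EXp 2 z = of_real (1/12) * complex_of_real (1 - 1 / real 2) powr (-z)
      + of_real (1/4) * complex_of_real (1 + 1 / real 2) powr (-z) + of_real (2/3)"
    unfolding EXp_def by (simp add: power2_eq_square)
  then show ?thesis unfolding powr_half powr_threehalf by simp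
qed

lemma key2:
  "-(L2 / 2) * EXp 2 z + (of_real (ad 2) * (of_real (1 - 1 / real 2) powr (-z) - 1)
        + of_real (bd 2) * (of_real (1 + 1 / real 2) powr (-z) - 1))
   = - (of_real (ln 2 / 9) * (4 * 2 powr z + 5) / 2)"
  unfolding EXp2_eq powr_half powr_threehalf
  by (simp add: ad_def bd_def L2_def field_simps)

lemma den_eq: "1/6 * 2 powr z + 1/2 * (2/3) powr z + 4/3 = 2 * EXp 2 z"
  unfolding EXp2_eq by (simp add: field_simps)



definition cfac :: "complex \<Rightarrow> nat \<Rightarrow> nat \<Rightarrow> complex" where
  "cfac z p k = dterm z k / of_nat p ^ k"

definition gpd :: "nat \<Rightarrow> nat \<Rightarrow> complex" where
  "gpd p k = of_real (ad p + bd p * (-1) ^ k)"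

definition mfdz :: "complex \<Rightarrow> nat \<Rightarrow> complex" where
  "mfdz z m = (\<Sum>p\<in>prime_factors m. gz z p (multiplicity p m) *
                 (\<Prod>q\<in>prime_factors m - {p}. fz z q (multiplicity q m)))"

lemma ofreal_inv_pow: "complex_of_real (1 / real p) ^ k = 1 / of_nat p ^ k"
  by (simp add: power_divide)

lemma fz_eq: "prime p \<Longrightarrow> k \<ge> 1 \<Longrightarrow> fz z p k = cfac z p k * gp p k 1"
  by (simp add: fz_def loc_def gp_val cfac_def ofreal_inv_pow power_one_over divide_inverse mult_ac power_inverse)

lemma gz_eq: "k \<ge> 1 \<Longrightarrow> gz z p k = cfac z p k * gpd p k"
  by (simp add: gz_def loc_def gpd_def cfac_def ofreal_inv_pow power_one_over divide_inverse mult_ac power_inverse)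

lemma pf_mult_pos: "p \<in> prime_factors m \<Longrightarrow> multiplicity p m \<ge> 1"
  using prime_factors_multiplicity[of m] by auto

lemma dz_over_m:
  assumes "m > 0"
  shows "dz z m / of_nat m = (\<Prod>p\<in>prime_factors m. cfac z p (multiplicity p m))"
proof -
  have "of_nat m = (of_nat (\<Prod>p\<in>prime_factors m. p ^ multiplicity p m) :: complex)"
    using assms by (simp add: prod_prime_factors)
  also have "\<dots> = (\<Prod>p\<in>prime_factors m. of_nat p ^ multiplicity p m)" by simp
  finally have m: "(of_nat m :: complex) = (\<Prod>p\<in>prime_factors m. of_nat p ^ multiplicity p m)" .
  show ?thesis unfolding dz_def m cfac_def dterm_def by (rule prod_dividef[symmetric])
qed

lemma val_identity:
  assumes m: "m > 0"
  shows "dz z m / of_nat m * hm m 1 = mf (fz z) m"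
proof -
  have "dz z m / of_nat m * hm m 1 =
      (\<Prod>p\<in>prime_factors m. cfac z p (multiplicity p m)) * (\<Prod>p\<in>prime_factors m. gp p (multiplicity p m) 1)"
    by (simp add: dz_over_m[OF m] hm_prod[OF m])
  also have "\<dots> = (\<Prod>p\<in>prime_factors m. cfac z p (multiplicity p m) * gp p (multiplicity p m) 1)"
    by (simp add: prod.distrib)
  also have "\<dots> = mf (fz z) m"
    unfolding mf_def
  proof (rule prod.cong)
    fix x assume x: "x \<in> prime_factors m"
    then have "multiplicity x m \<ge> 1" "prime x"
      by (auto simp: in_prime_factors_iff prime_multiplicity_gt_zero_iff Suc_le_eq)
    then show "cfac z x (multiplicity x m) * gp x (multiplicity x m) 1 = fz z x (multiplicity x m)"
      using fz_eq by simp
  qed simp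
  finally show ?thesis .
qed

lemma Hm_fun: "Hm m = (\<lambda>s. Fr s * (\<Prod>p\<in>prime_factors m. gp p (multiplicity p m) s) / zeta (2 * s))"
  if "m > 0"
  using hm_prod[OF that] by (simp add: fun_eq_iff Hm_def Fr_def)

lemma Hm_1: "m > 0 \<Longrightarrow> Hm m 1 = hm m 1 / zeta 2"
  by (simp add: Hm_def)

lemma zeta2s_deriv: "((\<lambda>s. zeta (2 * s)) has_field_derivative deriv zeta 2 * 2) (at 1)"
proof -
  have d1: "(zeta has_field_derivative deriv zeta 2) (at (2 * 1))" using zeta_deriv_2 by simp
  have d2: "((\<lambda>s::complex. 2 * s) has_field_derivative 2) (at 1)" by (auto intro!: derivative_eq_intros)
  show ?thesis using DERIV_chain2[OF d1 d2] by simp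
qed

lemma der_identity:
  assumes m: "m > 0"
  shows "dz z m / of_nat m * deriv (Hm m) 1 =
     (-(L2 / 2) / zeta 2 - 2 * deriv zeta 2 / (zeta 2 * zeta 2)) * mf (fz z) m + mfdz z m / zeta 2"
proof -
  define A where "A = prime_factors m"
  define v where "v p = multiplicity p m" for p
  define c where "c = (\<Prod>p\<in>A. cfac z p (v p))"
  define h1 where "h1 = (\<Prod>p\<in>A. gp p (v p) 1)"
  define H1 where "H1 = (\<Sum>x\<in>A. gpd x (v x) * (\<Prod>y\<in>A - {x}. gp y (v y) 1))"
  have Apr: "\<And>p. p \<in> A \<Longrightarrow> prime p \<and> v p \<ge> 1"
    by (auto simp: A_def v_def in_prime_factors_iff prime_multiplicity_gt_zero_iff Suc_le_eq)
  have H: "((\<lambda>s. \<Prod>p\<in>A. gp p (v p) s) has_field_derivative H1) (at 1)"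
    unfolding H1_def by (rule has_field_derivative_prod) (use Apr gp_deriv in \<open>auto simp: gpd_def\<close>)
  have z2: "zeta (2 * 1) \<noteq> 0" using zeta_2_nonzero by simp
  have D: "((\<lambda>s. Fr s * (\<Prod>p\<in>A. gp p (v p) s) / zeta (2 * s)) has_field_derivative
      (((-(L2 / 2)) * h1 + H1 * Fr 1) * zeta (2 * 1) - Fr 1 * h1 * (deriv zeta 2 * 2)) / (zeta (2 * 1) * zeta (2 * 1))) (at 1)"
    unfolding h1_def by (rule DERIV_divide[OF DERIV_mult[OF Fr_deriv H] zeta2s_deriv z2])
  have dH: "deriv (Hm m) 1 = (((-(L2 / 2)) * h1 + H1) * zeta 2 - h1 * (deriv zeta 2 * 2)) / (zeta 2 * zeta 2)"
    using DERIV_imp_deriv[OF D] unfolding Hm_fun[OF m] A_def v_def by (simp add: Fr_1)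
  have c: "dz z m / of_nat m = c" unfolding c_def A_def v_def by (rule dz_over_m[OF m])
  have ch: "c * h1 = mf (fz z) m"
    unfolding c_def h1_def mf_def A_def[symmetric] v_def[symmetric] prod.distrib[symmetric]
    by (rule prod.cong) (use Apr fz_eq in auto)
  have cH: "c * H1 = mfdz z m"
  proof -
    have "c * H1 = (\<Sum>x\<in>A. c * (gpd x (v x) * (\<Prod>y\<in>A - {x}. gp y (v y) 1)))"
      unfolding H1_def by (simp add: sum_distrib_left)
    also have "\<dots> = (\<Sum>x\<in>A. gz z x (v x) * (\<Prod>y\<in>A - {x}. fz z y (v y)))"
    proof (rule sum.cong)
      fix x assume x: "x \<in> A"
      have fin: "finite A" by (simp add: A_def)
      have "c = cfac z x (v x) * (\<Prod>y\<in>A - {x}. cfac z y (v y))"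
        unfolding c_def using prod.remove[OF fin x] .
      then have "c * (gpd x (v x) * (\<Prod>y\<in>A - {x}. gp y (v y) 1))
          = (cfac z x (v x) * gpd x (v x)) * (\<Prod>y\<in>A - {x}. cfac z y (v y) * gp y (v y) 1)"
        by (simp add: prod.distrib mult_ac)
      also have "\<dots> = gz z x (v x) * (\<Prod>y\<in>A - {x}. fz z y (v y))"
        using Apr x by (auto simp: gz_eq fz_eq intro!: prod.cong)
      finally show "c * (gpd x (v x) * (\<Prod>y\<in>A - {x}. gp y (v y) 1)) = gz z x (v x) * (\<Prod>y\<in>A - {x}. fz z y (v y))" .
    qed simp
    finally show ?thesis unfolding mfdz_def A_def v_def .
  qed
  have "dz z m / of_nat m * deriv (Hm m) 1
      = c * ((((-(L2 / 2)) * h1 + H1) * zeta 2 - h1 * (deriv zeta 2 * 2)) / (zeta 2 * zeta 2))"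
    by (simp only: c dH)
  also have "\<dots> = (((-(L2 / 2)) * (c * h1) + c * H1) * zeta 2 - (c * h1) * (deriv zeta 2 * 2)) / (zeta 2 * zeta 2)"
    by (simp add: times_divide_eq_right algebra_simps)
  also have "\<dots> = (((-(L2 / 2)) * mf (fz z) m + mfdz z m) * zeta 2 - mf (fz z) m * (deriv zeta 2 * 2)) / (zeta 2 * zeta 2)"
    by (simp only: ch cH)
  also have "\<dots> = (-(L2 / 2) / zeta 2 - 2 * deriv zeta 2 / (zeta 2 * zeta 2)) * mf (fz z) m + mfdz z m / zeta 2"
    using zeta_2_nonzero by (simp add: field_simps)
  finally show ?thesis .
qed



lemma infsum_fz: "prime n \<Longrightarrow> infsum (fz z n) UNIV = EXp n z"
  using fz_has_sum[of n z] prime_ge_2_nat[of n] by (simp add: infsumI)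

lemma infsum_gz_odd: "prime n \<Longrightarrow> n \<ge> 3 \<Longrightarrow> infsum (gz z n) UNIV = aphi n z"
  using gz_has_sum_odd[of n z] by (simp add: infsumI)

definition G2 :: "complex \<Rightarrow> complex" where
  "G2 z = of_real (ad 2) * (of_real (1 - 1 / real 2) powr (-z) - 1)
        + of_real (bd 2) * (of_real (1 + 1 / real 2) powr (-z) - 1)"

lemma infsum_gz_2: "infsum (gz z 2) UNIV = G2 z"
  using gz_has_sum_2[of z] by (simp add: infsumI G2_def)

definition Ap2 :: "complex \<Rightarrow> nat \<Rightarrow> complex" where
  "Ap2 z p = prodinf (\<lambda>q. if prime q \<and> q \<noteq> p then EXp q z else 1)"

lemma EXp_bound: "norm ((if prime n then EXp n z else 1) - 1) \<le> \<beta>z z n"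
proof (cases "prime n")
  case True
  have "norm (infsum (fz z n) UNIV - 1) \<le> \<beta>z z n"
    by (rule local_bound) (use fz_props True in auto)
  then show ?thesis using True infsum_fz by simp
next
  case False
  then show ?thesis using fz_props(5)[of z n] by simp
qed

lemma EL_split: "prime p \<Longrightarrow> EL z = EXp p z * Ap2 z p"
proof -
  assume p: "prime p"
  have "EL z = prodinf (\<lambda>n. if prime n then EXp n z else 1)" by (simp add: EL_def)
  also have "\<dots> = (if prime p then EXp p z else 1) * prodinf ((\<lambda>n. if prime n then EXp n z else 1)(p := 1))"
    by (rule prodinf_split[OF EXp_bound fz_props(4) fz_props(5)])
  also have "(\<lambda>n. if prime n then EXp n z else 1)(p := 1) = (\<lambda>q. if prime q \<and> q \<noteq> p then EXp q z else 1)"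
    by (auto simp: fun_eq_iff)
  finally show ?thesis using p by (simp add: Ap2_def)
qed

lemma EL_conv: "convergent_prod (\<lambda>n. if prime n then EXp n z else 1)"
  by (rule conv_prod_bound[OF EXp_bound fz_props(4)])

theorem lemma22:
  fixes z :: complex
  shows "(\<lambda>m. dz z (Suc m) / of_nat (Suc m) * Hm (Suc m) 1) sums (EL z / zeta 2)
       \<and> (\<lambda>m. dz z (Suc m) / of_nat (Suc m) * deriv (Hm (Suc m)) 1) sums
            ((EL_phi z - 2 * euler_mascheroni * EL z) / zeta 2)"
proof
  have pe: "prodinf (\<lambda>n. if prime n then infsum (fz z n) UNIV else 1) = EL z"
    unfolding EL_def by (rule prodinf_cong) (simp add: infsum_fz)
  have hEL: "(mf (fz z) has_sum EL z) {0<..}"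
    using euler_product[OF fz_props(1,2,3,4,5)[where z=z]] pe by simp
  have h1: "((\<lambda>m. mf (fz z) m / zeta 2) has_sum EL z / zeta 2) {0<..}"
    by (rule has_sum_divide_const[OF hEL])
  have e1: "dz z m / of_nat m * Hm m 1 = mf (fz z) m / zeta 2" if "m \<in> {0<..}" for m
    using that val_identity[of m z] Hm_1[of m] by simp
  have "((\<lambda>m. dz z m / of_nat m * Hm m 1) has_sum EL z / zeta 2) {0<..}"
    using h1 by (subst has_sum_cong[OF e1]) auto
  then show "(\<lambda>m. dz z (Suc m) / of_nat (Suc m) * Hm (Suc m) 1) sums (EL z / zeta 2)"
    by (rule suc_sums)
next
  obtain X where hX1: "((\<lambda>m. \<Sum>p\<in>prime_factors m. gz z p (multiplicity p m) *
                 (\<Prod>q\<in>prime_factors m - {p}. fz z q (multiplicity q m))) has_sum X) {0<..}"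
    and hX2: "((\<lambda>p. infsum (gz z p) UNIV * prodinf (\<lambda>q. if prime q \<and> q \<noteq> p then infsum (fz z q) UNIV else 1))
                has_sum X) {p. prime p}"
    using euler_deriv[OF fz_props(1,2,3,4,5) gz_props(1,2,3,4,5)] by blast
  have pe: "prodinf (\<lambda>n. if prime n then infsum (fz z n) UNIV else 1) = EL z"
    unfolding EL_def by (rule prodinf_cong) (simp add: infsum_fz)
  have hEL: "(mf (fz z) has_sum EL z) {0<..}"
    using euler_product[OF fz_props(1,2,3,4,5)[where z=z]] pe by simp
  define cc where "cc = -(L2 / 2) / zeta 2 - 2 * deriv zeta 2 / (zeta 2 * zeta 2)"
  have hmfd: "(mfdz z has_sum X) {0<..}" using hX1 unfolding mfdz_def[abs_def] .
  have hB: "((\<lambda>m. cc * mf (fz z) m + mfdz z m / zeta 2) has_sum (cc * EL z + X / zeta 2)) {0<..}"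
    by (intro has_sum_add has_sum_cmult_right hEL has_sum_divide_const hmfd)
  have e2: "dz z m / of_nat m * deriv (Hm m) 1 = cc * mf (fz z) m + mfdz z m / zeta 2" if "m \<in> {0<..}" for m
    using that der_identity[of m z] by (simp add: cc_def)
  have hB': "((\<lambda>m. dz z m / of_nat m * deriv (Hm m) 1) has_sum (cc * EL z + X / zeta 2)) {0<..}"
    using hB by (subst has_sum_cong[OF e2]) auto
  define P3 where "P3 = {p::nat. prime p \<and> p \<ge> 3}"
  define T where "T p = infsum (gz z p) UNIV * Ap2 z p" for p
  have Tcong: "infsum (gz z p) UNIV * prodinf (\<lambda>q. if prime q \<and> q \<noteq> p then infsum (fz z q) UNIV else 1) = T p" for p
  proof -
    have "prodinf (\<lambda>q. if prime q \<and> q \<noteq> p then infsum (fz z q) UNIV else 1) = Ap2 z p"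
      unfolding Ap2_def by (rule prodinf_cong) (simp add: infsum_fz)
    then show ?thesis by (simp add: T_def)
  qed
  have hT: "(T has_sum X) {p. prime p}" using hX2 unfolding Tcong .
  have sT3: "T summable_on P3"
    using has_sum_imp_summable[OF hT] by (rule summable_on_subset_banach) (auto simp: P3_def)
  define X3 where "X3 = infsum T P3"
  have hT3: "(T has_sum X3) P3" unfolding X3_def by (rule has_sum_infsum[OF sT3])
  have ins: "insert 2 P3 = {p. prime p}"
    by (auto simp: P3_def) (metis prime_ge_2_nat le_antisym not_less_eq_eq numeral_2_eq_2 numeral_3_eq_3)
  have "(T has_sum (T 2 + X3)) (insert 2 P3)"
    by (rule has_sum_insert[OF _ hT3]) (simp add: P3_def)
  then have X: "X = T 2 + X3" using hT ins has_sum_unique by metis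
  have S3: "(\<lambda>n. if prime n \<and> n \<ge> 3 then aphi n z * Ap2 z n else 0) sums X3"
  proof -
    have "(T has_sum X3) P3 \<longleftrightarrow> ((\<lambda>n. if prime n \<and> n \<ge> 3 then aphi n z * Ap2 z n else 0) has_sum X3) UNIV"
      by (rule has_sum_cong_neutral) (auto simp: P3_def T_def infsum_gz_odd)
    then show ?thesis using hT3 has_sum_imp_sums by blast
  qed
  have Ap2_def': "Ap2 z n = (\<Prod>q. if prime q \<and> q \<noteq> n then EXp q z else 1)" for n by (simp add: Ap2_def)
  have T2: "T 2 = G2 z * Ap2 z 2" by (simp add: T_def infsum_gz_2)
  have EL2: "EL z = EXp 2 z * Ap2 z 2" by (rule EL_split) simp
  define c9 where "c9 = complex_of_real (ln 2 / 9) * (4 * 2 powr z + 5)"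
  have k2: "-(L2 / 2) * EXp 2 z + G2 z = - (c9 / 2)"
    using key2[of z] by (simp add: G2_def c9_def)
  have R: "EL_phi z = X3 - c9 / 2 * Ap2 z 2 + (- 2 * deriv zeta 2 / zeta 2 + 2 * euler_mascheroni) * EL z"
  proof (cases "\<forall>p. prime p \<longrightarrow> EXp p z \<noteq> 0")
    case False
    have "EL_phi z = (\<Sum>n. if prime n \<and> n \<ge> 3 then aphi n z * Ap2 z n else 0)
      - of_real (ln 2 / 9) * (4 * 2 powr z + 5) / 2 * Ap2 z 2
      + (- 2 * deriv zeta 2 / zeta 2 + 2 * euler_mascheroni) * EL z"
      unfolding EL_phi_def Ap2_def' by (rule if_not_P[OF False])
    also have "(\<Sum>n. if prime n \<and> n \<ge> 3 then aphi n z * Ap2 z n else 0) = X3"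
      using S3 by (simp add: sums_iff)
    finally show ?thesis by (simp add: c9_def)
  next
    case True
    have nzF: "(if prime n then EXp n z else 1) \<noteq> 0" for n using True by simp
    have ELnz: "EL z \<noteq> 0"
      unfolding EL_def by (rule prodinf_nonzero[OF EL_conv nzF])
    have termeq: "(if prime n \<and> n \<ge> 3 then aphi n z / EXp n z else 0)
        = (if prime n \<and> n \<ge> 3 then aphi n z * Ap2 z n else 0) / EL z" for n
    proof (cases "prime n \<and> n \<ge> 3")
      case True
      then have "EL z = EXp n z * Ap2 z n" by (intro EL_split) auto
      moreover have "EXp n z \<noteq> 0" using True \<open>\<forall>p. prime p \<longrightarrow> EXp p z \<noteq> 0\<close> by auto
      ultimately show ?thesis using True ELnz by (simp add: field_simps)
    next
      case nF: False
      show ?thesis by (simp only: if_not_P[OF nF]) simp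
    qed
    have S3': "(\<lambda>n. if prime n \<and> n \<ge> 3 then aphi n z / EXp n z else 0) sums (X3 / EL z)"
      unfolding termeq by (rule sums_divide[OF S3])
    have E2nz: "EXp 2 z \<noteq> 0" using True by simp
    have "EL_phi z = EL z * phi z" using True by (simp add: EL_phi_def)
    also have "phi z = X3 / EL z - c9 / (2 * EXp 2 z) - 2 * deriv zeta 2 / zeta 2 + 2 * euler_mascheroni"
      unfolding phi_def using S3' den_eq[of z] by (simp add: sums_iff c9_def)
    also have "EL z * (X3 / EL z - c9 / (2 * EXp 2 z) - 2 * deriv zeta 2 / zeta 2 + 2 * euler_mascheroni)
        = X3 - c9 / 2 * Ap2 z 2 + (- 2 * deriv zeta 2 / zeta 2 + 2 * euler_mascheroni) * EL z"
      using ELnz E2nz EL2 by (simp add: field_simps)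
    finally show ?thesis .
  qed
  have final: "cc * EL z + X / zeta 2 = (EL_phi z - 2 * euler_mascheroni * EL z) / zeta 2"
  proof -
    have "cc * EL z + X / zeta 2 = ((-(L2 / 2) * EXp 2 z + G2 z) * Ap2 z 2 + X3) / zeta 2
        - 2 * deriv zeta 2 / (zeta 2 * zeta 2) * EL z"
      unfolding cc_def X T2 using EL2 zeta_2_nonzero by (simp add: field_simps)
    also have "\<dots> = (EL_phi z - 2 * euler_mascheroni * EL z) / zeta 2"
      unfolding k2 R using zeta_2_nonzero by (simp add: field_simps)
    finally show ?thesis .
  qed
  show "(\<lambda>m. dz z (Suc m) / of_nat (Suc m) * deriv (Hm (Suc m)) 1) sums
            ((EL_phi z - 2 * euler_mascheroni * EL z) / zeta 2)"
    using suc_sums[OF hB'] unfolding final .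
qed


end
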